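(* Let $X$ have a pdf $f$ satisfying Conditions (A) and (B) below. For $\delta>0$ let $D_\delta=D(Q_{\mathrm{uni}}^\delta)$ be the mean-squared distortion of the uniform quantizer with cell size $\delta$. Then $$\lim_{\delta\to 0}\Big[\mathrm{AoI}(S_{\mathrm z},Q_{\mathrm{uni}}^\delta,F^* )-\inf_{S}\ \inf_{Q:\,D(Q)\le D_\delta}\ \mathrm{AoI}(S,Q,F^* )\Big]=0,$$ where the outer infimum is over all stationary deterministic sampling policies $S$ and the inner one is over all quantizers $Q$ with $D(Q)\le D_\delta$. In words: as the distortion tends to $0$, zero-wait sampling, uniform quantization and the real-valued AoI-optimal code together asymptotically achieve the optimal AoI of the joint sampling–quantization–coding problem.
   Context: Let $X$ be a real random variable with pdf $f$. Condition (A): $f$ is continuous and differentiable, and its support is a bounded interval $I$. Let $M=\max f$. Condition (B): the integrals $\int_I f(x)\log_2^2 f(x)\,dx$ and $h(X)=-\int_I f(x)\log_2 f(x)\,dx$ exist and are finite. Quantizers. A quantizer $Q$ partitions $I$ into consecutive intervals $[a_{i-1},a_i]$. Each interval has a representation point $c_i$, and $Q(X)=c_i$ when $X$ lies in the $i$-th cell. Write $p_i=P(X\in[a_{i-1},a_i])$. The output entropy is $H[Q(X)]=-\sum_i p_i\log_2 p_i$, and the mean-squared distortion is $D(Q)=\sum_i\int_{a_{i-1}}^{a_i}(x-c_i)^2f(x)\,dx$. The uniform quantizer $Q_{\mathrm{uni}}^\delta$ partitions $I$ into consecutive cells of length $\delta$, with representation points at the cell midpoints. Codes. A real-valued code for $Q$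 assigns a length $l_i\in\mathbb R^+$ to each cell, subject to the Kraft inequality $\sum_i 2^{-l_i}\le1$. The random codeword length is $L=l_i$ when $X$ is in cell $i$. Sampling policies. A stationary deterministic sampling policy $S$ is given by a measurable function $z:[0,\infty)\to[0,W]$, for some fixed $W$, which determines the waiting time $Z=z(L)\ge0$. The zero-wait policy $S_{\mathrm z}$ has $z\equiv0$. Objective. The AoI of $(S,Q,l)$ is $\mathrm{AoI}(S,Q,l)=\frac{E[(L+Z)^2]}{2E[L+Z]}+E[L]$. The real-valued AoI-optimal code $F^*$ attains the infimum over codes, and we write $\mathrm{AoI}(S,Q,F^* )=\inf_l \mathrm{AoI}(S,Q,l)$, the infimum being over real-valued codes for $Q$. *)

theory Defs
  imports "HOL-Analysis.Analysis"
begin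

text \<open>A quantizer of the support interval [a,b] with n cells is given by
  thresholds t 0 = a < t 1 < ... < t n = b; cell i (1 \<le> i \<le> n) is [t (i-1), t i],
  with representation point c i.\<close>

definition is_quantizer :: "real \<Rightarrow> real \<Rightarrow> nat \<Rightarrow> (nat \<Rightarrow> real) \<Rightarrow> bool" where
  "is_quantizer a b n t \<longleftrightarrow> n \<ge> 1 \<and> t 0 = a \<and> t n = b \<and> (\<forall>i<n. t i < t (Suc i))"

definition cellprob :: "(real \<Rightarrow> real) \<Rightarrow> (nat \<Rightarrow> real) \<Rightarrow> nat \<Rightarrow> real" where
  "cellprob f t i = integral {t (i - 1)..t i} f"

definition distortion :: "(real \<Rightarrow> real) \<Rightarrow> nat \<Rightarrow> (nat \<Rightarrow> real) \<Rightarrow> (nat \<Rightarrow> real) \<Rightarrow> real" where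
  "distortion f n t c = (\<Sum>i=1..n. integral {t (i - 1)..t i} (\<lambda>x. (x - c i)^2 * f x))"

definition is_code :: "nat \<Rightarrow> (nat \<Rightarrow> real) \<Rightarrow> bool" where
  "is_code n l \<longleftrightarrow> (\<forall>i\<in>{1..n}. l i > 0) \<and> (\<Sum>i=1..n. 2 powr (- l i)) \<le> 1"

definition is_policy :: "real \<Rightarrow> (real \<Rightarrow> real) \<Rightarrow> bool" where
  "is_policy W z \<longleftrightarrow> z \<in> borel_measurable (restrict_space borel {0..}) \<and>
     (\<forall>x\<ge>0. 0 \<le> z x \<and> z x \<le> W)"

text \<open>AoI(S,Q,l) = E[(L+Z)^2] / (2 E[L+Z]) + E[L], with L = l_i on cell i, Z = z(L).\<close>
definition aoi :: "(real \<Rightarrow> real) \<Rightarrow> nat \<Rightarrow> (nat \<Rightarrow> real) \<Rightarrow> (real \<Rightarrow> real) \<Rightarrow> (nat \<Rightarrow> real) \<Rightarrow> real" where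
  "aoi f n t z l =
     (\<Sum>i=1..n. cellprob f t i * (l i + z (l i))^2) / (2 * (\<Sum>i=1..n. cellprob f t i * (l i + z (l i))))
     + (\<Sum>i=1..n. cellprob f t i * l i)"

definition aoi_opt :: "(real \<Rightarrow> real) \<Rightarrow> nat \<Rightarrow> (nat \<Rightarrow> real) \<Rightarrow> (real \<Rightarrow> real) \<Rightarrow> real" where
  "aoi_opt f n t z = Inf {aoi f n t z l | l. is_code n l}"

definition uni_n :: "real \<Rightarrow> real \<Rightarrow> real \<Rightarrow> nat" where
  "uni_n a b \<delta> = nat \<lceil>(b - a) / \<delta>\<rceil>"

definition uni_t :: "real \<Rightarrow> real \<Rightarrow> real \<Rightarrow> nat \<Rightarrow> real" where
  "uni_t a b \<delta> i = min (a + real i * \<delta>) b"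

definition uni_c :: "real \<Rightarrow> real \<Rightarrow> real \<Rightarrow> nat \<Rightarrow> real" where
  "uni_c a b \<delta> i = (uni_t a b \<delta> (i - 1) + uni_t a b \<delta> i) / 2"

end

theory Submission
  imports Defs
begin

lemma gibbs_pt:
  fixes y P \<phi> :: real
  assumes "y \<ge> 0" "P > 0" "\<phi> > 0"
  shows "y * ln y - y * ln P \<ge> y * ln \<phi> + y - P * \<phi>"
proof (cases "y = 0")
  case True thus ?thesis using assms by simp
next
  case False hence y: "y > 0" using assms by simp
  have "ln (P*\<phi>/y) \<le> P*\<phi>/y - 1" by (rule ln_le_minus_one) (use assms y in simp)
  moreover have "ln (P*\<phi>/y) = ln P + ln \<phi> - ln y" using assms y by (simp add: ln_div ln_mult)
  ultimately have "ln P + ln \<phi> - ln y \<le> P*\<phi>/y - 1" by simp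
  hence "y*(ln P + ln \<phi> - ln y) \<le> y*(P*\<phi>/y - 1)" using y by (simp add: mult_left_mono)
  also have "y*(P*\<phi>/y - 1) = P*\<phi> - y" using y by (simp add: field_simps)
  finally show ?thesis by (simp add: algebra_simps)
qed

lemma sqint:
  fixes u v c :: real
  assumes "u \<le> v"
  shows "integral {u..v} (\<lambda>x. (x - c)^2) = ((v - c)^3 - (u - c)^3) / 3"
proof -
  have "((\<lambda>x. (x - c)^2) has_integral ((\<lambda>x. (x - c)^3 / 3) v - (\<lambda>x. (x - c)^3 / 3) u)) {u..v}"
  proof (rule fundamental_theorem_of_calculus[OF assms])
    fix x assume "x \<in> {u..v}"
    have "((\<lambda>x. (x - c)^3 / 3) has_real_derivative (x - c)^2) (at x within {u..v})"
      by (rule derivative_eq_intros refl | simp)+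
    thus "((\<lambda>x. (x - c)^3 / 3) has_vector_derivative (x - c)^2) (at x within {u..v})"
      by (simp add: has_real_derivative_iff_has_vector_derivative)
  qed
  thus ?thesis by (simp add: integral_unique diff_divide_distrib)
qed

lemma sqint_ge:
  fixes u v c :: real
  assumes "u \<le> v"
  shows "((v - c)^3 - (u - c)^3) / 3 \<ge> (v - u)^3 / 12"
proof -
  have "((v - c)^3 - (u - c)^3) / 3 - (v - u)^3 / 12 = (v - u) * ((v - c) + (u - c))^2 / 4"
    by (simp add: power2_eq_square power3_eq_cube algebra_simps divide_simps)
  moreover have "(v - u) * ((v - c) + (u - c))^2 / 4 \<ge> 0" using assms by simp
  ultimately show ?thesis by linarith
qed

lemma sqint_mid:
  fixes u v :: real
  assumes "u \<le> v"
  shows "integral {u..v} (\<lambda>x. (x - (u + v) / 2)^2) = (v - u)^3 / 12"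
proof -
  have "((v - (u + v) / 2)^3 - (u - (u + v) / 2)^3) / 3 = (v - u)^3 / 12"
    by (simp add: power3_eq_cube algebra_simps divide_simps)
  thus ?thesis using sqint[OF assms, of "(u+v)/2"] by simp
qed

lemma cauchy_int:
  fixes u v c s :: real
  assumes "u \<le> v" "s > 0"
  shows "integral {u..v} (\<lambda>x. 1 / (pi * s * (1 + ((x - c) / s)^2))) \<le> 1"
proof -
  define F where "F = (\<lambda>x. arctan ((x - c) / s) / pi)"
  have "((\<lambda>x. 1 / (pi * s * (1 + ((x - c) / s)^2))) has_integral (F v - F u)) {u..v}"
  proof (rule fundamental_theorem_of_calculus[OF assms(1)])
    fix x assume "x \<in> {u..v}"
    have "(F has_real_derivative (1 / (pi * s * (1 + ((x - c) / s)^2)))) (at x within {u..v})"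
    proof -
      have d1: "((\<lambda>x. (x - c) / s) has_real_derivative 1 / s) (at x within {u..v})"
        using assms(2) by (auto intro!: derivative_eq_intros)
      have d2: "((\<lambda>x. arctan ((x - c) / s)) has_real_derivative
                  inverse (1 + ((x - c) / s)^2) * (1 / s)) (at x within {u..v})"
        by (rule DERIV_chain2[OF DERIV_arctan d1])
      have d3: "(F has_real_derivative inverse (1 + ((x - c) / s)^2) * (1 / s) / pi) (at x within {u..v})"
        unfolding F_def by (rule DERIV_cdivide[OF d2])
      have "inverse (1 + ((x - c) / s)^2) * (1 / s) / pi = 1 / (pi * s * (1 + ((x - c) / s)^2))"
        by (simp add: field_simps)
      with d3 show ?thesis by simp
    qed
    thus "(F has_vector_derivative (1 / (pi * s * (1 + ((x - c) / s)^2)))) (at x within {u..v})"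
      by (simp add: has_real_derivative_iff_has_vector_derivative)
  qed
  hence "integral {u..v} (\<lambda>x. 1 / (pi * s * (1 + ((x - c) / s)^2))) = F v - F u"
    by (rule integral_unique)
  also have "F v - F u \<le> 1"
  proof -
    have "arctan ((v - c) / s) - arctan ((u - c) / s) < pi"
      using arctan_bounded[of "(v - c) / s"] arctan_bounded[of "(u - c) / s"] by linarith
    thus ?thesis unfolding F_def by (simp add: diff_divide_distrib[symmetric] pi_gt_zero)
  qed
  finally show ?thesis .
qed

lemma pt_up:
  fixes y Q :: real
  assumes "y \<ge> 0" "Q > 0"
  shows "y * ln y - y * ln Q \<le> y * y / Q - y"
proof (cases "y = 0")
  case True thus ?thesis by simp
next
  case False hence y: "y > 0" using assms by simp
  have "ln (y / Q) \<le> y / Q - 1" by (rule ln_le_minus_one) (use assms y in simp)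
  moreover have "ln (y / Q) = ln y - ln Q" using assms y by (simp add: ln_div)
  ultimately have "y * (ln y - ln Q) \<le> y * (y / Q - 1)" using y by (intro mult_left_mono) auto
  thus ?thesis by (simp add: algebra_simps)
qed

lemma tmono:
  fixes t :: "nat \<Rightarrow> real"
  assumes "\<forall>i<n. t i < t (Suc i)" "i \<le> j" "j \<le> n"
  shows "t i \<le> t j"
  using assms(2,3)
proof (induction j)
  case 0 thus ?case by simp
next
  case (Suc j)
  show ?case
  proof (cases "i = Suc j")
    case True thus ?thesis by simp
  next
    case False
    hence "t i \<le> t j" using Suc by auto
    also have "t j < t (Suc j)" using assms(1) Suc by auto
    finally show ?thesis by simp
  qed
qed

lemma part_sum:
  fixes t :: "nat \<Rightarrow> real" and g :: "real \<Rightarrow> real"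
  assumes "\<forall>i<n. t i < t (Suc i)" "g integrable_on {t 0..t n}"
  shows "(\<Sum>i=1..n. integral {t (i - 1)..t i} g) = integral {t 0..t n} g"
proof -
  have "\<forall>k\<le>n. (\<Sum>i=1..k. integral {t (i - 1)..t i} g) = integral {t 0..t k} g"
  proof (intro allI impI)
    fix k assume "k \<le> n"
    thus "(\<Sum>i=1..k. integral {t (i - 1)..t i} g) = integral {t 0..t k} g"
    proof (induction k)
      case 0 thus ?case by simp
    next
      case (Suc k)
      have m1: "t 0 \<le> t k" using tmono[OF assms(1), of 0 k] Suc by simp
      have m2: "t k \<le> t (Suc k)" using assms(1) Suc by (simp add: less_imp_le)
      have m3: "t (Suc k) \<le> t n" using tmono[OF assms(1), of "Suc k" n] Suc by simp
      have m4: "t 0 \<le> t n" using tmono[OF assms(1), of 0 n] by simp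
      have ig: "g integrable_on {t 0..t (Suc k)}"
        by (rule integrable_on_subinterval[OF assms(2)]) (use m1 m2 m3 in auto)
      have "(\<Sum>i=1..Suc k. integral {t (i - 1)..t i} g)
            = (\<Sum>i=1..k. integral {t (i - 1)..t i} g) + integral {t k..t (Suc k)} g"
        by simp
      also have "\<dots> = integral {t 0..t k} g + integral {t k..t (Suc k)} g" using Suc by simp
      also have "\<dots> = integral {t 0..t (Suc k)} g"
        by (rule Henstock_Kurzweil_Integration.integral_combine[OF m1 m2 ig])
      finally show ?case .
    qed
  qed
  thus ?thesis by simp
qed

lemma tele:
  fixes t :: "nat \<Rightarrow> real"
  shows "(\<Sum>i=1..n. t i - t (i - 1)) = t n - t 0"
  by (induction n) auto

lemma jensen_ln:
  fixes P x :: "nat \<Rightarrow> real"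
  assumes "finite I" "\<forall>i\<in>I. P i > 0 \<and> x i > 0" "(\<Sum>i\<in>I. P i) = 1"
  shows "(\<Sum>i\<in>I. P i * ln (x i)) \<le> ln (\<Sum>i\<in>I. P i * x i)"
proof -
  define X where "X = (\<Sum>i\<in>I. P i * x i)"
  have "I \<noteq> {}" using assms(3) by auto
  hence X: "X > 0" unfolding X_def using assms by (intro sum_pos) auto
  have "(\<Sum>i\<in>I. P i * (ln (x i) - ln X)) \<le> (\<Sum>i\<in>I. P i * (x i / X - 1))"
  proof (rule sum_mono)
    fix i assume i: "i \<in> I"
    have "ln (x i / X) \<le> x i / X - 1" by (rule ln_le_minus_one) (use assms i X in simp)
    moreover have "ln (x i / X) = ln (x i) - ln X" using assms i X by (intro ln_divide_pos) auto
    ultimately show "P i * (ln (x i) - ln X) \<le> P i * (x i / X - 1)"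
      using assms i by (intro mult_left_mono) auto
  qed
  also have "(\<Sum>i\<in>I. P i * (x i / X - 1)) = (\<Sum>i\<in>I. P i * x i) / X - (\<Sum>i\<in>I. P i)"
    by (simp add: algebra_simps sum_subtractf sum_divide_distrib)
  also have "\<dots> = 0" using X assms by (simp add: X_def)
  finally have "(\<Sum>i\<in>I. P i * ln (x i)) - ln X * (\<Sum>i\<in>I. P i) \<le> 0"
    by (simp add: algebra_simps sum_subtractf sum_distrib_left sum_distrib_right)
  thus ?thesis using assms by (simp add: X_def)
qed

lemma uni_facts:
  fixes a b \<delta> :: real
  assumes ab: "a < b" and d: "0 < \<delta>"
  defines "N \<equiv> uni_n a b \<delta>" and "t \<equiv> uni_t a b \<delta>"
  shows "is_quantizer a b N t" "real N * \<delta> < b - a + \<delta>"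
    "\<And>i. i \<in> {1..N} \<Longrightarrow> t i - t (i - 1) \<le> \<delta>"
    "\<delta> < b - a \<Longrightarrow> N \<ge> 2"
proof -
  define x where "x = (b - a) / \<delta>"
  have x: "x > 0" using ab d by (simp add: x_def)
  have cx: "real_of_int \<lceil>x\<rceil> \<ge> x" "real_of_int \<lceil>x\<rceil> < x + 1" using ceiling_correct[of x] by auto
  have RN: "real N = real_of_int \<lceil>x\<rceil>" unfolding N_def uni_n_def x_def[symmetric] using cx x by simp
  have lt: "\<And>i. i < N \<Longrightarrow> a + real i * \<delta> < b"
  proof -
    fix i assume "i < N"
    hence "real i < real N" by simp
    hence "int i < \<lceil>x\<rceil>" using RN by linarith
    hence "real i < x" using less_ceiling_iff[of "int i" x] by simp
    thus "a + real i * \<delta> < b" using d by (simp add: x_def field_simps)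
  qed
  have tlt: "\<And>i. i < N \<Longrightarrow> t i = a + real i * \<delta>" unfolding t_def uni_t_def using lt by (simp add: less_imp_le)
  have "real N > 0" using RN cx x by linarith
  hence N1: "N \<ge> 1" by simp
  have tN: "t N = b"
  proof -
    have "real N * \<delta> \<ge> x * \<delta>" using RN cx d by (simp add: mult_right_mono)
    hence "a + real N * \<delta> \<ge> b" using d by (simp add: x_def)
    thus ?thesis unfolding t_def uni_t_def by simp
  qed
  show "is_quantizer a b N t"
    unfolding is_quantizer_def
  proof (intro conjI allI impI)
    show "1 \<le> N" by (rule N1)
    show "t 0 = a" unfolding t_def uni_t_def using ab by simp
    show "t N = b" by (rule tN)
    fix i assume i: "i < N"
    have "t (Suc i) = min (a + (real i + 1) * \<delta>) b" unfolding t_def uni_t_def by (simp add: add.commute)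
    thus "t i < t (Suc i)" using tlt[OF i] lt[OF i] d by (simp add: algebra_simps)
  qed
  show "real N * \<delta> < b - a + \<delta>"
  proof -
    have "real N * \<delta> < (x + 1) * \<delta>" using RN cx d by simp
    also have "(x + 1) * \<delta> = b - a + \<delta>" using d by (simp add: x_def field_simps)
    finally show ?thesis .
  qed
  show "\<And>i. i \<in> {1..N} \<Longrightarrow> t i - t (i - 1) \<le> \<delta>"
  proof -
    fix i assume i: "i \<in> {1..N}"
    hence "t (i - 1) = a + real (i - 1) * \<delta>" using tlt by auto
    moreover have "t i \<le> a + real i * \<delta>" unfolding t_def uni_t_def by simp
    moreover have "real (i - 1) = real i - 1" using i by auto
    ultimately show "t i - t (i - 1) \<le> \<delta>" by (simp add: algebra_simps)
  qed
  show "\<delta> < b - a \<Longrightarrow> N \<ge> 2"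
  proof -
    assume "\<delta> < b - a"
    hence "x > 1" using d by (simp add: x_def)
    hence "real N > 1" using RN cx by linarith
    thus "N \<ge> 2" by simp
  qed
qed

lemma kraft_lb:
  fixes P l :: "nat \<Rightarrow> real"
  assumes "\<forall>i\<in>{1..n}. P i \<ge> 0" "(\<Sum>i=1..n. P i) = 1" "is_code n l"
  shows "(\<Sum>i=1..n. P i * l i) * ln 2 \<ge> (\<Sum>i=1..n. - P i * ln (P i))"
proof -
  have kr: "(\<Sum>i=1..n. 2 powr (- l i)) \<le> 1" using assms(3) by (simp add: is_code_def)
  have tm: "\<And>i. i \<in> {1..n} \<Longrightarrow> P i * l i * ln 2 + P i * ln (P i) \<ge> P i - 2 powr (- l i)"
  proof -
    fix i assume i: "i \<in> {1..n}"
    define q where "q = 2 powr (- l i)"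
    have q: "q > 0" by (simp add: q_def)
    have lq: "ln q = - l i * ln 2" by (simp add: q_def ln_powr)
    show "P i * l i * ln 2 + P i * ln (P i) \<ge> P i - 2 powr (- l i)"
    proof (cases "P i = 0")
      case True thus ?thesis by simp
    next
      case False
      hence Pp: "P i > 0" using assms(1) i by force
      have "ln (q / P i) \<le> q / P i - 1" by (rule ln_le_minus_one) (use q Pp in simp)
      moreover have "ln (q / P i) = ln q - ln (P i)" using q Pp by (intro ln_divide_pos) auto
      ultimately have "P i * (ln q - ln (P i)) \<le> P i * (q / P i - 1)" using Pp by (intro mult_left_mono) auto
      also have "P i * (q / P i - 1) = q - P i" using Pp by (simp add: field_simps)
      finally show ?thesis using lq by (simp add: q_def algebra_simps)
    qed
  qed
  have "(\<Sum>i=1..n. P i * l i * ln 2 + P i * ln (P i)) \<ge> (\<Sum>i=1..n. P i - 2 powr (- l i))"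
    by (rule sum_mono) (rule tm)
  moreover have "(\<Sum>i=1..n. P i - 2 powr (- l i)) \<ge> 0" using kr assms(2) by (simp add: sum_subtractf)
  moreover have "(\<Sum>i=1..n. P i * l i * ln 2 + P i * ln (P i))
      = (\<Sum>i=1..n. P i * l i) * ln 2 - (\<Sum>i=1..n. - P i * ln (P i))"
    by (simp add: sum.distrib sum_distrib_right sum_negf)
  ultimately show ?thesis by linarith
qed

lemma aoi_lb:
  fixes l :: "nat \<Rightarrow> real"
  assumes P0: "\<forall>i\<in>{1..n}. cellprob f t i \<ge> 0" and P1: "(\<Sum>i=1..n. cellprob f t i) = 1"
    and lpos: "\<forall>i\<in>{1..n}. l i > 0" and z: "\<forall>x\<ge>0. z x \<ge> 0"
  shows "aoi f n t z l \<ge> 3/2 * (\<Sum>i=1..n. cellprob f t i * l i)"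
proof -
  define P where "P = cellprob f t"
  define w where "w = (\<lambda>i. l i + z (l i))"
  define L where "L = (\<Sum>i=1..n. P i * l i)"
  define B where "B = (\<Sum>i=1..n. P i * w i)"
  define A where "A = (\<Sum>i=1..n. P i * (w i)^2)"
  have wl: "\<And>i. i \<in> {1..n} \<Longrightarrow> w i \<ge> l i" unfolding w_def using z lpos by (simp add: less_imp_le)
  obtain j where j: "j \<in> {1..n}" "P j > 0"
  proof (rule ccontr)
    assume "\<not> thesis"
    hence "\<forall>j\<in>{1..n}. P j \<le> 0" using that by force
    hence "(\<Sum>i=1..n. P i) \<le> 0" by (intro sum_nonpos) auto
    thus False using P1 by (simp add: P_def)
  qed
  have L: "L > 0" unfolding L_def
  proof (rule sum_pos2[OF _ j(1)])
    show "0 < P j * l j" using j lpos by simp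
    fix i assume "i \<in> {1..n}"
    thus "0 \<le> P i * l i" using lpos P0 by (simp add: P_def less_imp_le)
  qed simp
  have BL: "B \<ge> L" unfolding B_def L_def
    by (rule sum_mono) (use wl P0 in \<open>auto simp: P_def intro: mult_left_mono\<close>)
  have B: "B > 0" using L BL by simp
  have "0 \<le> (\<Sum>i=1..n. P i * (w i - B)^2)" by (rule sum_nonneg) (use P0 in \<open>auto simp: P_def\<close>)
  also have "(\<Sum>i=1..n. P i * (w i - B)^2) = (\<Sum>i=1..n. P i * (w i)^2 - 2 * B * (P i * w i) + B^2 * P i)"
    by (rule sum.cong) (simp_all add: power2_eq_square algebra_simps)
  also have "\<dots> = (\<Sum>i=1..n. P i * (w i)^2) - 2 * B * (\<Sum>i=1..n. P i * w i) + B^2 * (\<Sum>i=1..n. P i)"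
    by (simp only: sum.distrib sum_subtractf sum_distrib_left)
  also have "\<dots> = A - 2 * B * B + B^2 * (\<Sum>i=1..n. P i)"
    by (simp only: A_def B_def)
  finally have AB: "A \<ge> B^2" using P1 by (simp add: P_def power2_eq_square)
  have "A / (2 * B) \<ge> B^2 / (2 * B)" using AB B by (intro divide_right_mono) auto
  hence "A / (2 * B) \<ge> B / 2" using B by (simp add: power2_eq_square)
  moreover have "aoi f n t z l = A / (2 * B) + L"
    by (simp add: aoi_def A_def B_def L_def P_def w_def)
  ultimately show ?thesis using BL by (simp add: L_def P_def)
qed

lemma code_exists:
  assumes "n \<ge> 1"
  shows "is_code n (\<lambda>_. log 2 (real n) + 1)"
proof -
  have n: "real n > 0" using assms by simp
  have pos: "log 2 (real n) \<ge> 0" using assms by simp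
  have e1: "2 powr (log 2 (real n) + 1) = 2 * real n"
    using n by (simp only: powr_add powr_log_cancel) simp_all
  have "2 powr (- (log 2 (real n) + 1)) = 1 / (2 powr (log 2 (real n) + 1))"
    by (rule powr_minus_divide)
  hence "2 powr (- (log 2 (real n) + 1)) = 1 / (2 * real n)" using e1 by simp
  hence "(\<Sum>i=1..n. 2 powr (- (log 2 (real n) + 1))) = 1 / 2" using n by simp
  thus ?thesis unfolding is_code_def using pos by auto
qed

lemma aoi_z0_bound:
  fixes P l :: "nat \<Rightarrow> real" and lam :: real
  assumes "\<forall>i\<in>{1..n}. P i \<ge> 0" "(\<Sum>i=1..n. P i) = 1" "H = (\<Sum>i=1..n. P i * l i)" "H > 0"
  shows "(\<Sum>i=1..n. P i * (l i)^2) / (2 * H) + H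
           \<le> 3/2 * H + (\<Sum>i=1..n. P i * (l i - lam)^2) / (2 * H)"
proof -
  have "(\<Sum>i=1..n. P i * (l i - lam)^2) = (\<Sum>i=1..n. P i * (l i)^2) - 2 * lam * H + lam^2 * (\<Sum>i=1..n. P i)"
  proof -
    have "(\<Sum>i=1..n. P i * (l i - lam)^2) = (\<Sum>i=1..n. P i * (l i)^2 - 2 * lam * (P i * l i) + lam^2 * P i)"
      by (rule sum.cong) (simp_all add: power2_eq_square algebra_simps)
    also have "\<dots> = (\<Sum>i=1..n. P i * (l i)^2) - 2 * lam * (\<Sum>i=1..n. P i * l i) + lam^2 * (\<Sum>i=1..n. P i)"
      by (simp only: sum.distrib sum_subtractf sum_distrib_left)
    finally show ?thesis using assms(3) by simp
  qed
  hence V: "(\<Sum>i=1..n. P i * (l i - lam)^2) = (\<Sum>i=1..n. P i * (l i)^2) - H^2 + (H - lam)^2"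
    using assms(2) by (simp add: power2_eq_square algebra_simps)
  have "(\<Sum>i=1..n. P i * (l i)^2) \<le> H^2 + (\<Sum>i=1..n. P i * (l i - lam)^2)" using V by simp
  hence "(\<Sum>i=1..n. P i * (l i)^2) / (2 * H) \<le> (H^2 + (\<Sum>i=1..n. P i * (l i - lam)^2)) / (2 * H)"
    using assms(4) by (intro divide_right_mono) auto
  also have "\<dots> = H / 2 + (\<Sum>i=1..n. P i * (l i - lam)^2) / (2 * H)"
    using assms(4) by (simp add: field_simps power2_eq_square)
  finally show ?thesis by simp
qed

lemma xln2_bound:
  fixes x M :: real
  assumes "0 < x" "x \<le> M" "M \<ge> 1"
  shows "x * (ln x)^2 \<le> 4 + M * (ln M)^2"
proof (cases "x \<le> 1")
  case True
  define y where "y = sqrt x"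
  have y: "y > 0" "y \<le> 1" "y^2 = x" using assms True by (auto simp: y_def)
  have lx: "ln x = 2 * ln y" using y by (metis ln_realpow of_nat_numeral)
  have "ln (1 / y) \<le> 1 / y - 1" by (rule ln_le_minus_one) (use y in simp)
  hence "- ln y \<le> 1 / y" using y by (simp add: ln_div)
  moreover have "ln y \<le> 0" using y by simp
  ultimately have "(- ln y)^2 \<le> (1 / y)^2" by (intro power_mono) auto
  hence "(ln y)^2 \<le> (1 / y)^2" by simp
  hence "y^2 * (ln y)^2 \<le> y^2 * (1 / y)^2" using y by (intro mult_left_mono) auto
  hence "x * (ln y)^2 \<le> 1" using y assms(1) by (simp add: power_divide)
  hence "x * (ln x)^2 \<le> 4" using lx by (simp add: power_mult_distrib)
  moreover have "M * (ln M)^2 \<ge> 0" using assms by simp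
  ultimately show ?thesis by linarith
next
  case False
  have l: "0 \<le> ln x" "ln x \<le> ln M" using False assms by auto
  have "(ln x)^2 \<le> (ln M)^2" using l by (intro power_mono) auto
  hence "x * (ln x)^2 \<le> M * (ln M)^2" using assms by (intro mult_mono) auto
  thus ?thesis by simp
qed

locale qsetup =
  fixes f :: "real \<Rightarrow> real" and a b :: real
  assumes ab: "a < b"
    and nonneg: "\<forall>x. f x \<ge> 0"
    and support: "closure {x. f x > 0} = {a..b}"
    and pdf: "(f has_integral 1) {a..b}"
    and cont: "continuous_on {a..b} f"
    and B2: "(\<lambda>x. f x * log 2 (f x)) absolutely_integrable_on {a..b}"
begin

lemma fge0[simp]: "0 \<le> f x" using nonneg by auto

lemma f_out: "x \<notin> {a..b} \<Longrightarrow> f x = 0"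
proof -
  assume "x \<notin> {a..b}"
  have "{x. f x > 0} \<subseteq> closure {x. f x > 0}" by (rule closure_subset)
  hence sub: "{x. f x > 0} \<subseteq> {a..b}" unfolding support .
  with \<open>x \<notin> {a..b}\<close> have "x \<notin> {x. f x > 0}" by (meson subsetD)
  hence "\<not> f x > 0" by simp
  thus ?thesis using fge0[of x] by linarith
qed

lemma exists_pos:
  assumes "open S" "S \<noteq> {}" "S \<subseteq> {a..b}"
  shows "\<exists>x\<in>S. f x > 0"
proof -
  have "S \<inter> closure {x. f x > 0} \<noteq> {}" using assms support by auto
  hence "S \<inter> {x. f x > 0} \<noteq> {}" using open_Int_closure_eq_empty[OF assms(1)] by blast
  thus ?thesis by auto
qed

lemma cont_sub: "a \<le> u \<Longrightarrow> v \<le> b \<Longrightarrow> continuous_on {u..v} f"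
  using cont by (rule continuous_on_subset) auto

lemma int_f: "a \<le> u \<Longrightarrow> v \<le> b \<Longrightarrow> f integrable_on {u..v}"
  using cont_sub integrable_continuous_real by blast

lemma cont_sq: "a \<le> u \<Longrightarrow> v \<le> b \<Longrightarrow> continuous_on {u..v} (\<lambda>x. (x - c)^2 * f x)"
  by (intro continuous_intros cont_sub)

lemma int_sq: "a \<le> u \<Longrightarrow> v \<le> b \<Longrightarrow> (\<lambda>x. (x - c)^2 * f x) integrable_on {u..v}"
  using cont_sq integrable_continuous_real by blast

lemma int_fln_ab: "(\<lambda>x. f x * ln (f x)) integrable_on {a..b}"
proof -
  have "(\<lambda>x. f x * log 2 (f x)) integrable_on {a..b}"
    using B2 absolutely_integrable_on_def by blast
  hence "(\<lambda>x. ln 2 * (f x * log 2 (f x))) integrable_on {a..b}"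
    by (rule integrable_on_mult_right)
  moreover have "(\<lambda>x. ln 2 * (f x * log 2 (f x))) = (\<lambda>x. f x * ln (f x))"
    by (simp add: log_def fun_eq_iff)
  ultimately show ?thesis by simp
qed

lemma int_fln: "a \<le> u \<Longrightarrow> v \<le> b \<Longrightarrow> (\<lambda>x. f x * ln (f x)) integrable_on {u..v}"
  using int_fln_ab by (rule integrable_on_subinterval) auto

lemma p_pos:
  assumes "a \<le> u" "u < v" "v \<le> b"
  shows "integral {u..v} f > 0"
proof -
  have "{u<..<v} \<noteq> {}" "{u<..<v} \<subseteq> {a..b}" using assms by auto
  then obtain x where x: "x \<in> {u<..<v}" "f x > 0"
    using exists_pos[of "{u<..<v}"] by (meson open_greaterThanLessThan)
  have ge: "integral {u..v} f \<ge> 0"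
    by (rule integral_nonneg) (auto intro: int_f assms)
  have "integral {u..v} f \<noteq> 0"
    using integral_eq_0_iff[OF cont_sub[OF assms(1,3)] assms(2)] x by auto
  with ge show ?thesis by linarith
qed

lemma d_pos:
  assumes "a \<le> u" "u < v" "v \<le> b"
  shows "integral {u..v} (\<lambda>x. (x - c)^2 * f x) > 0"
proof -
  have "{u<..<v} - {c} \<noteq> {}"
  proof
    assume h: "{u<..<v} - {c} = {}"
    have 1: "(u+v)/2 \<in> {u<..<v}" "(u + (u+v)/2)/2 \<in> {u<..<v}" using assms by (auto simp: field_simps)
    have "(u+v)/2 \<noteq> (u + (u+v)/2)/2" using assms by simp
    with 1 h show False by blast
  qed
  moreover have "open ({u<..<v} - {c})" by (intro open_Diff) auto
  moreover have "{u<..<v} - {c} \<subseteq> {a..b}" using assms by auto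
  ultimately obtain x where x: "x \<in> {u<..<v} - {c}" "f x > 0"
    using exists_pos[of "{u<..<v} - {c}"] by blast
  have ge: "integral {u..v} (\<lambda>x. (x - c)^2 * f x) \<ge> 0"
    by (rule integral_nonneg) (auto intro: int_sq assms)
  have "integral {u..v} (\<lambda>x. (x - c)^2 * f x) \<noteq> 0"
    using integral_eq_0_iff[OF cont_sq[OF assms(1,3)] assms(2)] x by auto
  with ge show ?thesis by linarith
qed

lemma bounded_f: "\<exists>M\<ge>1. \<forall>x. f x \<le> M"
proof -
  obtain x where "x \<in> {a..b}" "\<forall>y\<in>{a..b}. f y \<le> f x"
    using continuous_attains_sup[OF compact_Icc _ cont] ab by fastforce
  hence "\<forall>y. f y \<le> max 1 (f x)" using f_out by (metis fge0 max.coboundedI2 order_trans)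
  thus ?thesis by (intro exI[of _ "max 1 (f x)"]) auto
qed

lemma unif_cont:
  assumes "e > 0"
  shows "\<exists>d>0. \<forall>x\<in>{a..b}. \<forall>y\<in>{a..b}. \<bar>x - y\<bar> < d \<longrightarrow> \<bar>f x - f y\<bar> < e"
proof -
  have "uniformly_continuous_on {a..b} f"
    using compact_uniformly_continuous[OF cont] by simp
  then obtain d where "d > 0" "\<forall>x\<in>{a..b}. \<forall>y\<in>{a..b}. dist y x < d \<longrightarrow> dist (f y) (f x) < e"
    unfolding uniformly_continuous_on_def using assms by blast
  thus ?thesis by (intro exI[of _ d]) (auto simp: dist_real_def abs_minus_commute)
qed


lemma gibbs:
  assumes "a \<le> u" "u < v" "v \<le> b" "continuous_on {u..v} \<phi>" "\<forall>x\<in>{u..v}. \<phi> x > 0"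
    "integral {u..v} \<phi> \<le> 1"
  shows "integral {u..v} (\<lambda>x. f x * ln (f x)) - integral {u..v} f * ln (integral {u..v} f)
           \<ge> integral {u..v} (\<lambda>x. f x * ln (\<phi> x))"
proof -
  define P where "P = integral {u..v} f"
  have P: "P > 0" using p_pos assms by (simp add: P_def)
  have cf: "continuous_on {u..v} f" using cont_sub assms by simp
  have cl: "continuous_on {u..v} (\<lambda>x. ln (\<phi> x))"
    using assms(4,5) by (intro continuous_intros) auto
  have ip: "\<phi> integrable_on {u..v}" using assms(4) integrable_continuous_real by blast
  have il: "(\<lambda>x. f x * ln (\<phi> x)) integrable_on {u..v}"
    using cf cl by (intro integrable_continuous_real continuous_on_mult)
  have if1: "f integrable_on {u..v}" using int_f assms by simp
  have ifl: "(\<lambda>x. f x * ln (f x)) integrable_on {u..v}" using int_fln assms by simp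
  have i1: "(\<lambda>x. f x * ln (\<phi> x) + f x - P * \<phi> x) integrable_on {u..v}"
    by (intro integrable_diff integrable_add il if1 integrable_on_mult_right ip)
  have i2: "(\<lambda>x. f x * ln (f x) - f x * ln P) integrable_on {u..v}"
    by (intro integrable_diff ifl integrable_on_mult_left if1)
  have "integral {u..v} (\<lambda>x. f x * ln (\<phi> x) + f x - P * \<phi> x)
        \<le> integral {u..v} (\<lambda>x. f x * ln (f x) - f x * ln P)"
    by (rule integral_le[OF i1 i2]) (use gibbs_pt[OF fge0 P] assms(5) in auto)
  also have "\<dots> = integral {u..v} (\<lambda>x. f x * ln (f x)) - P * ln P"
    using integral_diff[OF ifl integrable_on_mult_left[OF if1, of "ln P"]] by (simp add: P_def)
  finally have "integral {u..v} (\<lambda>x. f x * ln (\<phi> x)) + P - P * integral {u..v} \<phi>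
     \<le> integral {u..v} (\<lambda>x. f x * ln (f x)) - P * ln P"
    using integral_diff[OF integrable_add[OF il if1] integrable_on_mult_right[OF ip, of P]]
      integral_add[OF il if1] by (simp add: P_def)
  moreover have "P * integral {u..v} \<phi> \<le> P" using P assms(6) by (simp add: mult_left_le)
  ultimately show ?thesis by (simp add: P_def)
qed

lemma cell_unif:
  assumes "a \<le> u" "u < v" "v \<le> b"
  shows "integral {u..v} (\<lambda>x. f x * ln (f x)) - integral {u..v} f * ln (integral {u..v} f)
           \<ge> - integral {u..v} f * ln (v - u)"
proof -
  have "integral {u..v} (\<lambda>x. f x * ln (f x)) - integral {u..v} f * ln (integral {u..v} f)
           \<ge> integral {u..v} (\<lambda>x. f x * ln ((\<lambda>_. 1 / (v - u)) x))"
    by (rule gibbs) (use assms in auto)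
  also have "integral {u..v} (\<lambda>x. f x * ln ((\<lambda>_. 1 / (v - u)) x)) = - integral {u..v} f * ln (v - u)"
    using assms by (simp add: ln_div)
  finally show ?thesis .
qed


lemma cell_cauchy:
  fixes c :: real
  assumes "a \<le> u" "u < v" "v \<le> b"
  defines "P \<equiv> integral {u..v} f" and "Dc \<equiv> integral {u..v} (\<lambda>x. (x - c)^2 * f x)"
  shows "integral {u..v} (\<lambda>x. f x * ln (f x)) - P * ln P
           \<ge> - (P/2) * ln (12 * Dc / P) - (P/2) * ln (pi^2 * exp 2 / 12)"
proof -
  have P: "P > 0" using p_pos assms by simp
  have D: "Dc > 0" using d_pos assms by simp
  define s where "s = sqrt (Dc / P)"
  have s: "s > 0" using P D by (simp add: s_def)
  have s2: "s^2 = Dc / P" using P D by (simp add: s_def)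
  define \<phi> where "\<phi> = (\<lambda>x. 1 / (pi * s * (1 + ((x - c) / s)^2)))"
  have qpos: "\<And>x. 1 + ((x - c) / s)^2 > 0" by (intro add_pos_nonneg) auto
  have qne: "\<And>x. 1 + ((x - c) / s)^2 \<noteq> 0" using qpos by (metis less_irrefl)
  have cphi: "continuous_on {u..v} \<phi>"
    unfolding \<phi>_def using s by (intro continuous_intros) (simp_all add: qne del: power_divide)
  have phipos: "\<forall>x\<in>{u..v}. \<phi> x > 0" unfolding \<phi>_def using s qpos by (auto simp del: power_divide)
  have "integral {u..v} (\<lambda>x. f x * ln (f x)) - P * ln P \<ge> integral {u..v} (\<lambda>x. f x * ln (\<phi> x))"
    unfolding P_def by (rule gibbs[OF assms(1-3) cphi phipos]) (unfold \<phi>_def, rule cauchy_int, use assms s in auto)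
  moreover have "integral {u..v} (\<lambda>x. f x * ln (\<phi> x))
      \<ge> integral {u..v} (\<lambda>x. - ln (pi * s) * f x - (x - c)^2 * f x / s^2)"
  proof (rule integral_le)
    have cl: "continuous_on {u..v} (\<lambda>x. ln (\<phi> x))"
      using cphi phipos by (intro continuous_intros) auto
    show "(\<lambda>x. f x * ln (\<phi> x)) integrable_on {u..v}"
      using cl cont_sub[OF assms(1,3)] by (intro integrable_continuous_real continuous_on_mult)
    show "(\<lambda>x. - ln (pi * s) * f x - (x - c)^2 * f x / s^2) integrable_on {u..v}"
      using cont_sub[OF assms(1,3)] s by (intro integrable_continuous_real continuous_intros) auto
    fix x assume "x \<in> {u..v}"
    have q: "1 + ((x - c) / s)^2 > 0" by (simp add: add_pos_nonneg)
    have "ln (\<phi> x) = - ln (pi * s) - ln (1 + ((x - c) / s)^2)"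
      unfolding \<phi>_def using s q by (simp add: ln_div ln_mult pi_gt_zero)
    moreover have "ln (1 + ((x - c) / s)^2) \<le> ((x - c) / s)^2" by (rule ln_add_one_self_le_self) simp
    ultimately have "ln (\<phi> x) \<ge> - ln (pi * s) - (x - c)^2 / s^2" by (simp add: power_divide)
    hence "f x * ln (\<phi> x) \<ge> f x * (- ln (pi * s) - (x - c)^2 / s^2)"
      by (simp add: mult_left_mono)
    thus "- ln (pi * s) * f x - (x - c)^2 * f x / s^2 \<le> f x * ln (\<phi> x)"
      by (simp add: algebra_simps)
  qed
  moreover have "integral {u..v} (\<lambda>x. - ln (pi * s) * f x - (x - c)^2 * f x / s^2)
      = - ln (pi * s) * P - Dc / s^2"
  proof -
    have i1: "(\<lambda>x. - ln (pi * s) * f x) integrable_on {u..v}"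
      using int_f[OF assms(1,3)] by (rule integrable_on_mult_right)
    have i2: "(\<lambda>x. (x - c)^2 * f x / s^2) integrable_on {u..v}"
      using int_sq[OF assms(1,3), of c] by (simp add: integrable_on_mult_left divide_inverse)
    have "integral {u..v} (\<lambda>x. (x - c)^2 * f x / s^2) = Dc / s^2"
      unfolding Dc_def by (simp add: divide_inverse)
    thus ?thesis using integral_diff[OF i1 i2] by (simp add: P_def)
  qed
  moreover have "Dc / s^2 = P" using s2 P D by simp
  ultimately have T: "integral {u..v} (\<lambda>x. f x * ln (f x)) - P * ln P \<ge> - ln (pi * s) * P - P"
    by linarith
  have "ln (pi * s) = (ln (pi^2 * exp 2 / 12) + ln (12 * Dc / P)) / 2 - 1"
  proof -
    have "ln (pi^2 * exp 2 / 12) + ln (12 * Dc / P) = ln (pi^2 * exp 2 / 12 * (12 * Dc / P))"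
      by (rule ln_mult_pos[symmetric]) (use P D in \<open>auto simp: pi_gt_zero\<close>)
    also have "pi^2 * exp 2 / 12 * (12 * Dc / P) = exp 2 * (pi * s)^2"
      using s2 by (simp add: power_mult_distrib)
    also have "ln (exp 2 * (pi * s)^2) = 2 + 2 * ln (pi * s)"
      using s by (simp add: ln_mult ln_realpow pi_gt_zero)
    finally show ?thesis by (simp add: field_simps)
  qed
  with T show ?thesis by (simp add: algebra_simps add_divide_distrib)
qed

lemma cell_good:
  fixes c \<eta> :: real
  assumes "a \<le> u" "u < v" "v \<le> b" "\<eta> \<ge> 0"
    and good: "\<forall>x\<in>{u..v}. \<forall>y\<in>{u..v}. f y \<le> (1 + \<eta>) * f x"
  defines "P \<equiv> integral {u..v} f" and "Dc \<equiv> integral {u..v} (\<lambda>x. (x - c)^2 * f x)"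
  shows "integral {u..v} (\<lambda>x. f x * ln (f x)) - P * ln P
           \<ge> - (P/2) * ln (12 * Dc / P) - P * ln (1 + \<eta>)"
proof -
  have P: "P > 0" using p_pos assms by simp
  have D: "Dc > 0" using d_pos assms by simp
  have uu: "u \<in> {u..v}" using assms by simp
  have P1: "P \<le> (1 + \<eta>) * f u * (v - u)"
  proof -
    have "P \<le> integral {u..v} (\<lambda>x. (1 + \<eta>) * f u)"
      unfolding P_def by (rule integral_le) (use int_f assms good uu in auto)
    thus ?thesis using assms by (simp add: algebra_simps)
  qed
  have D1: "Dc \<ge> f u / (1 + \<eta>) * ((v - u)^3 / 12)"
  proof -
    have "integral {u..v} (\<lambda>x. f u / (1 + \<eta>) * (x - c)^2) \<le> Dc"
      unfolding Dc_def
    proof (rule integral_le)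
      show "(\<lambda>x. f u / (1 + \<eta>) * (x - c)^2) integrable_on {u..v}"
        by (intro integrable_continuous_real continuous_intros)
      show "(\<lambda>x. (x - c)^2 * f x) integrable_on {u..v}" using int_sq assms by simp
      fix x assume x: "x \<in> {u..v}"
      have "f u \<le> (1 + \<eta>) * f x" using good x uu by blast
      hence "f u / (1 + \<eta>) \<le> f x" using assms by (simp add: divide_simps mult.commute)
      hence "f u / (1 + \<eta>) * (x - c)^2 \<le> f x * (x - c)^2"
        by (rule mult_right_mono) simp
      thus "f u / (1 + \<eta>) * (x - c)^2 \<le> (x - c)^2 * f x"
        by (simp only: mult.commute)
    qed
    moreover have "integral {u..v} (\<lambda>x. f u / (1 + \<eta>) * (x - c)^2)
        = f u / (1 + \<eta>) * (((v - c)^3 - (u - c)^3) / 3)"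
      unfolding integral_mult_right sqint[OF less_imp_le[OF assms(2)]] ..
    moreover have "f u / (1 + \<eta>) * (((v - c)^3 - (u - c)^3) / 3) \<ge> f u / (1 + \<eta>) * ((v - u)^3 / 12)"
      using sqint_ge[of u v c] assms by (intro mult_left_mono) auto
    ultimately show ?thesis by linarith
  qed
  have key: "P * (v - u)^2 \<le> (1 + \<eta>)^2 * (12 * Dc)"
  proof -
    have "P * (v - u)^2 \<le> (1 + \<eta>) * f u * (v - u) * (v - u)^2"
      using P1 by (intro mult_right_mono) auto
    also have "\<dots> = (1 + \<eta>)^2 * 12 * (f u / (1 + \<eta>) * ((v - u)^3 / 12))"
      using assms by (simp add: power2_eq_square power3_eq_cube field_simps)
    also have "\<dots> \<le> (1 + \<eta>)^2 * 12 * Dc" using D1 by (intro mult_left_mono) auto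
    finally show ?thesis by simp
  qed
  have "2 * ln (v - u) \<le> 2 * ln (1 + \<eta>) + ln (12 * Dc / P)"
  proof -
    have "(v - u)^2 \<le> (1 + \<eta>)^2 * (12 * Dc / P)" using key P by (simp add: field_simps)
    hence "ln ((v - u)^2) \<le> ln ((1 + \<eta>)^2 * (12 * Dc / P))"
      using assms by (intro ln_mono) auto
    moreover have "ln ((1 + \<eta>)^2 * (12 * Dc / P)) = ln ((1 + \<eta>)^2) + ln (12 * Dc / P)"
      by (rule ln_mult_pos) (use assms P D in auto)
    moreover have "ln ((1 + \<eta>)^2) = 2 * ln (1 + \<eta>)" using assms by (simp add: ln_realpow)
    moreover have "ln ((v - u)^2) = 2 * ln (v - u)" using assms by (simp add: ln_realpow)
    ultimately show ?thesis by linarith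
  qed
  hence "ln (v - u) \<le> ln (1 + \<eta>) + ln (12 * Dc / P) / 2" by linarith
  hence "P * ln (v - u) \<le> P * (ln (1 + \<eta>) + ln (12 * Dc / P) / 2)"
    using P by (intro mult_left_mono) auto
  hence "- P * ln (v - u) \<ge> - (P/2) * ln (12 * Dc / P) - P * ln (1 + \<eta>)"
    by (simp add: algebra_simps)
  thus ?thesis using cell_unif[OF assms(1-3)] by (simp add: P_def)
qed


lemma sq_ge_pt:
  fixes x c s y :: real
  assumes "s > 0" "s \<le> \<bar>x - c\<bar>" "y \<ge> 0"
  shows "y \<le> (x - c)^2 * y / s^2"
proof -
  have "s^2 \<le> \<bar>x - c\<bar>^2" using assms by (intro power_mono) auto
  hence "s^2 \<le> (x - c)^2" by simp
  hence "y * s^2 \<le> (x - c)^2 * y" using assms by (simp add: mult_left_mono mult.commute)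
  thus ?thesis using assms by (simp add: field_simps)
qed

lemma cell_long:
  fixes c s M :: real
  assumes "a \<le> u" "u \<le> v" "v \<le> b" "s > 0" "\<forall>x. f x \<le> M"
  shows "integral {u..v} f \<le> integral {u..v} (\<lambda>x. (x - c)^2 * f x) / s^2 + 2 * s * M"
proof -
  define g where "g = (\<lambda>x. (x - c)^2 * f x / s^2)"
  define u' where "u' = max u (min v (c - s))"
  define v' where "v' = max u' (min v (c + s))"
  have o: "u \<le> u'" "u' \<le> v'" "v' \<le> v" unfolding u'_def v'_def using assms by auto
  have cg: "\<And>p q. a \<le> p \<Longrightarrow> q \<le> b \<Longrightarrow> continuous_on {p..q} g"
    unfolding g_def using assms by (intro continuous_intros cont_sub) auto
  have ig: "\<And>p q. a \<le> p \<Longrightarrow> q \<le> b \<Longrightarrow> g integrable_on {p..q}"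
    using cg integrable_continuous_real by blast
  have A: "integral {u..u'} f \<le> integral {u..u'} g"
  proof (cases "u' = u")
    case True thus ?thesis by simp
  next
    case False
    hence "u' \<le> c - s" unfolding u'_def by auto
    show ?thesis
    proof (rule integral_le)
      show "f integrable_on {u..u'}" using int_f assms o by auto
      show "g integrable_on {u..u'}" using ig assms o by auto
      fix x assume "x \<in> {u..u'}"
      hence "s \<le> \<bar>x - c\<bar>" using \<open>u' \<le> c - s\<close> by auto
      thus "f x \<le> g x" unfolding g_def using sq_ge_pt assms by auto
    qed
  qed
  have C: "integral {v'..v} f \<le> integral {v'..v} g"
  proof (cases "v' = v")
    case True thus ?thesis by simp
  next
    case False
    hence "v' \<ge> c + s" unfolding v'_def u'_def using o by (auto simp: max_def min_def split: if_splits)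
    show ?thesis
    proof (rule integral_le)
      show "f integrable_on {v'..v}" using int_f assms o by auto
      show "g integrable_on {v'..v}" using ig assms o by auto
      fix x assume "x \<in> {v'..v}"
      hence "s \<le> \<bar>x - c\<bar>" using \<open>v' \<ge> c + s\<close> by auto
      thus "f x \<le> g x" unfolding g_def using sq_ge_pt assms by auto
    qed
  qed
  have len: "v' - u' \<le> 2 * s"
    unfolding v'_def u'_def using assms by (auto simp: max_def min_def split: if_splits)
  have B: "integral {u'..v'} f \<le> 2 * s * M"
  proof -
    have "integral {u'..v'} f \<le> integral {u'..v'} (\<lambda>x. M)"
      by (rule integral_le) (use int_f assms o in auto)
    also have "\<dots> = (v' - u') * M" using o by simp
    also have "\<dots> \<le> 2 * s * M"
    proof -
      have "M \<ge> 0" using assms(5) fge0 order_trans by blast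
      thus ?thesis using len o by (intro mult_right_mono) auto
    qed
    finally show ?thesis .
  qed
  have Bg: "integral {u'..v'} g \<ge> 0"
    by (rule integral_nonneg) (use ig assms o in \<open>auto simp: g_def\<close>)
  have "integral {u..v} f = integral {u..u'} f + (integral {u'..v'} f + integral {v'..v} f)"
    using Henstock_Kurzweil_Integration.integral_combine[where a=u and c=u' and b=v and f=f] Henstock_Kurzweil_Integration.integral_combine[where a=u' and c=v' and b=v and f=f] int_f assms o by auto
  moreover have "integral {u..v} g = integral {u..u'} g + (integral {u'..v'} g + integral {v'..v} g)"
    using Henstock_Kurzweil_Integration.integral_combine[where a=u and c=u' and b=v and f=g] Henstock_Kurzweil_Integration.integral_combine[where a=u' and c=v' and b=v and f=g] ig assms o by auto
  moreover have "integral {u..v} g = integral {u..v} (\<lambda>x. (x - c)^2 * f x) / s^2"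
    unfolding g_def by (simp add: divide_inverse)
  ultimately show ?thesis using A B C Bg by linarith
qed


lemma avg_bound:
  assumes "a \<le> u" "u < v" "v \<le> b" "\<forall>x\<in>{u..v}. \<forall>y\<in>{u..v}. f y \<le> f x + \<epsilon>"
    "x \<in> {u..v}"
  shows "f x \<le> integral {u..v} f / (v - u) + \<epsilon>"
proof -
  have "integral {u..v} (\<lambda>y. f x - \<epsilon>) \<le> integral {u..v} f"
  proof (rule integral_le)
    fix y assume "y \<in> {u..v}"
    thus "f x - \<epsilon> \<le> f y" using assms(4,5) by fastforce
  qed (use int_f assms in auto)
  hence "(v - u) * (f x - \<epsilon>) \<le> integral {u..v} f" using assms by simp
  thus ?thesis using assms by (simp add: field_simps)
qed

lemma cell_uni_ent:
  assumes "a \<le> u" "u < v" "v \<le> b" "\<delta> > 0"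
    and flat: "\<forall>x\<in>{u..v}. \<forall>y\<in>{u..v}. f y \<le> f x + \<epsilon>"
  defines "P \<equiv> integral {u..v} f"
  shows "integral {u..v} (\<lambda>x. f x * ln (f x)) - P * ln (P / \<delta>) \<le> \<delta> * (P / (v - u) + \<epsilon>) - P"
proof -
  have P: "P > 0" using p_pos assms by simp
  define K where "K = P / (v - u) + \<epsilon>"
  have if1: "f integrable_on {u..v}" using int_f assms by simp
  have ifl: "(\<lambda>x. f x * ln (f x)) integrable_on {u..v}" using int_fln assms by simp
  have "integral {u..v} (\<lambda>x. f x * ln (f x) - f x * ln (P / \<delta>))
        \<le> integral {u..v} (\<lambda>x. f x * (K * \<delta> / P) - f x)"
  proof (rule integral_le)
    show "(\<lambda>x. f x * ln (f x) - f x * ln (P / \<delta>)) integrable_on {u..v}"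
      by (intro integrable_diff ifl integrable_on_mult_left if1)
    show "(\<lambda>x. f x * (K * \<delta> / P) - f x) integrable_on {u..v}"
      by (intro integrable_diff integrable_on_mult_left if1)
    fix x assume x: "x \<in> {u..v}"
    have Q: "P / \<delta> > 0" using P assms by simp
    have "f x * ln (f x) - f x * ln (P / \<delta>) \<le> f x * f x / (P / \<delta>) - f x"
      using pt_up[OF fge0 Q] .
    also have "f x * f x / (P / \<delta>) \<le> f x * K / (P / \<delta>)"
    proof -
      have "f x \<le> K" unfolding K_def P_def by (rule avg_bound[OF assms(1-3) flat x])
      hence "f x * f x \<le> f x * K" by (simp add: mult_left_mono)
      thus ?thesis using Q by (intro divide_right_mono) auto
    qed
    finally show "f x * ln (f x) - f x * ln (P / \<delta>) \<le> f x * (K * \<delta> / P) - f x"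
      using assms P by (simp add: field_simps)
  qed
  moreover have "integral {u..v} (\<lambda>x. f x * ln (f x) - f x * ln (P / \<delta>))
      = integral {u..v} (\<lambda>x. f x * ln (f x)) - P * ln (P / \<delta>)"
    using integral_diff[OF ifl integrable_on_mult_left[OF if1]] by (simp add: P_def)
  moreover have "integral {u..v} (\<lambda>x. f x * (K * \<delta> / P) - f x) = P * (K * \<delta> / P) - P"
  proof -
    have "integral {u..v} (\<lambda>x. f x * (K * \<delta> / P) - f x)
          = integral {u..v} (\<lambda>x. f x * (K * \<delta> / P)) - integral {u..v} f"
      by (rule integral_diff[OF integrable_on_mult_left[OF if1] if1])
    also have "integral {u..v} (\<lambda>x. f x * (K * \<delta> / P)) = integral {u..v} f * (K * \<delta> / P)"
      by (rule integral_mult_left)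
    finally show ?thesis by (simp add: P_def mult.commute)
  qed
  moreover have "P * (K * \<delta> / P) - P = K * \<delta> - P" using P by simp
  ultimately show ?thesis by (simp add: K_def mult.commute)
qed

lemma cell_uni_dist:
  assumes "a \<le> u" "u < v" "v \<le> b"
    and flat: "\<forall>x\<in>{u..v}. \<forall>y\<in>{u..v}. f y \<le> f x + \<epsilon>"
  shows "integral {u..v} (\<lambda>x. (x - (u + v) / 2)^2 * f x)
           \<le> (integral {u..v} f / (v - u) + \<epsilon>) * ((v - u)^3 / 12)"
proof -
  define K where "K = integral {u..v} f / (v - u) + \<epsilon>"
  have "integral {u..v} (\<lambda>x. (x - (u + v) / 2)^2 * f x) \<le> integral {u..v} (\<lambda>x. K * (x - (u + v) / 2)^2)"
  proof (rule integral_le)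
    show "(\<lambda>x. (x - (u + v) / 2)^2 * f x) integrable_on {u..v}" using int_sq assms by simp
    show "(\<lambda>x. K * (x - (u + v) / 2)^2) integrable_on {u..v}"
      by (intro integrable_continuous_real continuous_intros)
    fix x assume x: "x \<in> {u..v}"
    have "f x \<le> K" unfolding K_def by (rule avg_bound[OF assms(1-3) flat x])
    hence "f x * (x - (u + v) / 2)^2 \<le> K * (x - (u + v) / 2)^2"
      by (rule mult_right_mono) simp
    thus "(x - (u + v) / 2)^2 * f x \<le> K * (x - (u + v) / 2)^2"
      by (simp only: mult.commute)
  qed
  also have "\<dots> = K * ((v - u)^3 / 12)"
    unfolding integral_mult_right sqint_mid[OF less_imp_le[OF assms(2)]] ..
  finally show ?thesis by (simp add: K_def)
qed


lemma quant_cell: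
  assumes "is_quantizer a b n t" "i \<in> {1..n}"
  shows "a \<le> t (i - 1)" "t (i - 1) < t i" "t i \<le> b"
proof -
  have m: "\<forall>j<n. t j < t (Suc j)" "t 0 = a" "t n = b" using assms(1) by (auto simp: is_quantizer_def)
  show "a \<le> t (i - 1)" using tmono[OF m(1), of 0 "i - 1"] m assms(2) by auto
  obtain k where k: "i = Suc k" "k < n" using assms(2) by (cases i) auto
  show "t (i - 1) < t i" using m(1) k by simp
  show "t i \<le> b" using tmono[OF m(1), of i n] m assms(2) by auto
qed

lemma quant_sum:
  fixes g :: "real \<Rightarrow> real"
  assumes "is_quantizer a b n t" "g integrable_on {a..b}"
  shows "(\<Sum>i=1..n. integral {t (i - 1)..t i} g) = integral {a..b} g"
proof -
  have m: "\<forall>j<n. t j < t (Suc j)" "t 0 = a" "t n = b" using assms(1) by (auto simp: is_quantizer_def)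
  show ?thesis using part_sum[OF m(1), of g] m assms(2) by simp
qed

lemma quant_prob_sum:
  assumes "is_quantizer a b n t"
  shows "(\<Sum>i=1..n. cellprob f t i) = 1"
  using quant_sum[OF assms, of f] pdf unfolding cellprob_def
  by (simp add: integral_unique has_integral_integrable)

lemma quant_len_sum:
  assumes "is_quantizer a b n t"
  shows "(\<Sum>i=1..n. t i - t (i - 1)) = b - a"
  using tele[of t n] assms by (simp add: is_quantizer_def)


lemma bad_cell:
  fixes u v \<eta> m rr :: real
  assumes "a \<le> u" "u < v" "v \<le> b" "v - u < rr" "0 < \<eta>" "\<eta> \<le> 1"
    and uc: "\<forall>x\<in>{a..b}. \<forall>y\<in>{a..b}. \<bar>x - y\<bar> < rr \<longrightarrow> \<bar>f x - f y\<bar> < \<eta> * m"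
    and nb: "\<not> (\<forall>x\<in>{u..v}. \<forall>y\<in>{u..v}. f y \<le> (1 + \<eta>) * f x)"
  shows "integral {u..v} f \<le> 2 * m * (v - u)"
proof -
  obtain x y where xy: "x \<in> {u..v}" "y \<in> {u..v}" "f y > (1 + \<eta>) * f x" using nb by auto
  have ab': "\<And>z. z \<in> {u..v} \<Longrightarrow> z \<in> {a..b}" using assms by auto
  have "\<bar>f x - f y\<bar> < \<eta> * m" using uc ab'[OF xy(1)] ab'[OF xy(2)] xy assms(4) by auto
  hence "\<eta> * f x < \<eta> * m" using xy(3) by (simp add: algebra_simps)
  hence fx: "f x < m" using assms(5) by simp
  have "\<forall>z\<in>{u..v}. f z \<le> 2 * m"
  proof
    fix z assume z: "z \<in> {u..v}"
    have "\<bar>z - x\<bar> < rr" using z xy assms(4) by auto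
    hence "\<bar>f z - f x\<bar> < \<eta> * m" using uc ab'[OF z] ab'[OF xy(1)] by auto
    moreover have "\<eta> * m \<le> m"
    proof -
      have "0 \<le> m" using fx fge0[of x] by linarith
      thus ?thesis using assms(5,6) by (intro mult_left_le_one_le) auto
    qed
    ultimately show "f z \<le> 2 * m" using fx by linarith
  qed
  hence "integral {u..v} f \<le> integral {u..v} (\<lambda>_. 2 * m)"
    by (intro integral_le) (use int_f assms in auto)
  thus ?thesis using assms by (simp add: algebra_simps)
qed

lemma LB:
  assumes "\<rho> > 0"
  shows "\<exists>D0>0. \<forall>n t c. is_quantizer a b n t \<longrightarrow> distortion f n t c \<le> D0 \<longrightarrow>
    (\<Sum>i=1..n. - cellprob f t i * ln (cellprob f t i))
      \<ge> - integral {a..b} (\<lambda>x. f x * ln (f x)) - ln (12 * distortion f n t c) / 2 - \<rho>"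
proof -
  obtain M where M: "M \<ge> 1" "\<forall>x. f x \<le> M" using bounded_f by auto
  define K0 where "K0 = \<bar>ln (pi^2 * exp 2 / 12)\<bar>"
  have K0: "K0 \<ge> 0" by (simp add: K0_def)
  define \<eta> where "\<eta> = min 1 (exp (\<rho>/2) - 1)"
  have e1: "exp (\<rho>/2) > 1" using assms by simp
  have \<eta>: "\<eta> > 0" "\<eta> \<le> 1" using e1 by (auto simp: \<eta>_def)
  have \<eta>3: "ln (1 + \<eta>) \<le> \<rho>/2"
  proof -
    have "1 + \<eta> \<le> exp (\<rho>/2)" unfolding \<eta>_def by linarith
    hence "ln (1 + \<eta>) \<le> ln (exp (\<rho>/2))" using \<eta> by (intro ln_mono) auto
    thus ?thesis by simp
  qed
  have \<eta>4: "ln (1 + \<eta>) \<ge> 0" using \<eta> by simp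
  define \<rho>' where "\<rho>' = \<rho> / (K0 + 1)"
  have \<rho>': "\<rho>' > 0" using assms K0 by (simp add: \<rho>'_def)
  have \<rho>'2: "K0 / 2 * \<rho>' \<le> \<rho> / 2"
  proof -
    have "K0 * \<rho>' \<le> (K0 + 1) * \<rho>'" using \<rho>' by simp
    also have "\<dots> = \<rho>" using K0 by (simp add: \<rho>'_def)
    finally show ?thesis by simp
  qed
  have ba: "b - a > 0" using ab by simp
  define m where "m = \<rho>' / (4 * (b - a))"
  have m: "m > 0" using \<rho>' ba by (simp add: m_def)
  obtain r0 where r0: "r0 > 0" "\<forall>x\<in>{a..b}. \<forall>y\<in>{a..b}. \<bar>x - y\<bar> < r0 \<longrightarrow> \<bar>f x - f y\<bar> < \<eta> * m"
    using unif_cont[of "\<eta> * m"] \<eta> m by auto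
  define r where "r = r0 / 2"
  have r: "r > 0" "r < r0" using r0 by (auto simp: r_def)
  define s where "s = \<rho>' * r / (8 * M * (b - a))"
  have s: "s > 0" using \<rho>' r M ba by (simp add: s_def)
  define D0 where "D0 = s^2 * \<rho>' * r / (4 * (b - a))"
  have D0: "D0 > 0" using s \<rho>' r ba by (simp add: D0_def)
  define B where "B = D0 / s^2 + 2 * s * M"
  have B: "B = \<rho>' * r / (2 * (b - a))"
  proof -
    have B1: "D0 / s^2 = \<rho>' * r / (4 * (b - a))" using s by (simp add: D0_def)
    have B2: "2 * s * M = \<rho>' * r / (4 * (b - a))" using M ba by (simp add: s_def)
    have gen: "\<And>X C::real. C > 0 \<Longrightarrow> X / (4 * C) + X / (4 * C) = X / (2 * C)"
      by (simp add: field_simps)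
    show ?thesis unfolding B_def B1 B2 using gen[OF ba] by simp
  qed
  have B0: "B > 0" using B \<rho>' r ba by simp
  show ?thesis
  proof (intro exI[of _ D0] conjI allI impI)
    show "D0 > 0" by (rule D0)
    fix n t c assume q: "is_quantizer a b n t" and Dq: "distortion f n t c \<le> D0"
    define P where "P = (\<lambda>i. integral {t (i - 1)..t i} f)"
    define Dd where "Dd = (\<lambda>i. integral {t (i - 1)..t i} (\<lambda>x. (x - c i)^2 * f x))"
    define E where "E = (\<lambda>i. integral {t (i - 1)..t i} (\<lambda>x. f x * ln (f x)))"
    define good where "good = (\<lambda>i. \<forall>x\<in>{t (i - 1)..t i}. \<forall>y\<in>{t (i - 1)..t i}. f y \<le> (1 + \<eta>) * f x)"
    define bad where "bad = (\<lambda>i. if good i then 0 else P i)"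
    have cell: "\<And>i. i \<in> {1..n} \<Longrightarrow> a \<le> t (i - 1) \<and> t (i - 1) < t i \<and> t i \<le> b"
      using quant_cell[OF q] by blast
    have Ppos: "\<And>i. i \<in> {1..n} \<Longrightarrow> P i > 0" unfolding P_def using p_pos cell by blast
    have Dpos: "\<And>i. i \<in> {1..n} \<Longrightarrow> Dd i > 0" unfolding Dd_def using d_pos cell by blast
    have Psum: "(\<Sum>i=1..n. P i) = 1" using quant_prob_sum[OF q] by (simp add: P_def cellprob_def)
    have Dsum: "distortion f n t c = (\<Sum>i=1..n. Dd i)" by (simp add: distortion_def Dd_def)
    have Esum: "(\<Sum>i=1..n. E i) = integral {a..b} (\<lambda>x. f x * ln (f x))"
      using quant_sum[OF q int_fln_ab] by (simp add: E_def)
    have Dle: "\<And>i. i \<in> {1..n} \<Longrightarrow> Dd i \<le> D0"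
    proof -
      fix i assume i: "i \<in> {1..n}"
      have "Dd i \<le> (\<Sum>j=1..n. Dd j)"
        by (rule member_le_sum) (use i Dpos in \<open>auto simp: less_imp_le\<close>)
      thus "Dd i \<le> D0" using Dsum Dq by simp
    qed
    have Ti: "\<And>i. i \<in> {1..n} \<Longrightarrow> E i - P i * ln (P i)
        \<ge> - (P i / 2) * ln (12 * Dd i / P i) - P i * ln (1 + \<eta>) - K0 / 2 * bad i"
    proof -
      fix i assume i: "i \<in> {1..n}"
      note ci = cell[OF i]
      show "E i - P i * ln (P i) \<ge> - (P i / 2) * ln (12 * Dd i / P i) - P i * ln (1 + \<eta>) - K0 / 2 * bad i"
      proof (cases "good i")
        case True
        have "E i - P i * ln (P i) \<ge> - (P i / 2) * ln (12 * Dd i / P i) - P i * ln (1 + \<eta>)"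
          unfolding E_def P_def Dd_def
          by (rule cell_good) (use ci \<eta> True in \<open>auto simp: good_def\<close>)
        thus ?thesis using True by (simp add: bad_def)
      next
        case False
        have "E i - P i * ln (P i) \<ge> - (P i / 2) * ln (12 * Dd i / P i) - (P i / 2) * ln (pi^2 * exp 2 / 12)"
          unfolding E_def P_def Dd_def by (rule cell_cauchy) (use ci in auto)
        moreover have "(P i / 2) * ln (pi^2 * exp 2 / 12) \<le> K0 / 2 * P i + P i * ln (1 + \<eta>)"
        proof -
          have "ln (pi^2 * exp 2 / 12) \<le> K0" by (simp add: K0_def)
          hence "(P i / 2) * ln (pi^2 * exp 2 / 12) \<le> (P i / 2) * K0"
            using Ppos[OF i] by (intro mult_left_mono) auto
          moreover have "P i * ln (1 + \<eta>) \<ge> 0" using Ppos[OF i] \<eta>4 by simp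
          ultimately show ?thesis by (simp add: algebra_simps)
        qed
        ultimately show ?thesis using False by (simp add: bad_def)
      qed
    qed
    have badi: "\<And>i. i \<in> {1..n} \<Longrightarrow> bad i \<le> 2 * m * (t i - t (i - 1)) + (t i - t (i - 1)) / r * B"
    proof -
      fix i assume i: "i \<in> {1..n}"
      note ci = cell[OF i]
      have nn: "0 \<le> 2 * m * (t i - t (i - 1))" "0 \<le> (t i - t (i - 1)) / r * B"
        using ci m r B0 by auto
      show "bad i \<le> 2 * m * (t i - t (i - 1)) + (t i - t (i - 1)) / r * B"
      proof (cases "t i - t (i - 1) \<le> r")
        case True
        show ?thesis
        proof (cases "good i")
          case True thus ?thesis using nn by (simp add: bad_def)
        next
          case False
          have "P i \<le> 2 * m * (t i - t (i - 1))"
            unfolding P_def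
            by (rule bad_cell[where \<eta>=\<eta> and rr=r0]) (use ci \<eta> r0 r True False in \<open>auto simp: good_def\<close>)
          thus ?thesis using False nn by (simp add: bad_def)
        qed
      next
        case False
        have "bad i \<le> P i" using Ppos[OF i] by (simp add: bad_def less_imp_le)
        also have "P i \<le> Dd i / s^2 + 2 * s * M"
          unfolding P_def Dd_def by (rule cell_long) (use ci s M in auto)
        also have "\<dots> \<le> B"
          unfolding B_def using Dle[OF i] s by (simp add: divide_right_mono)
        also have "B \<le> (t i - t (i - 1)) / r * B"
        proof -
          have "1 \<le> (t i - t (i - 1)) / r" using False r by simp
          hence "1 * B \<le> (t i - t (i - 1)) / r * B" using B0 by (intro mult_right_mono) auto
          thus ?thesis by simp
        qed
        finally show ?thesis using nn by simp
      qed
    qed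
    have badsum: "(\<Sum>i=1..n. bad i) \<le> \<rho>'"
    proof -
      have "(\<Sum>i=1..n. bad i) \<le> (\<Sum>i=1..n. 2 * m * (t i - t (i - 1)) + (t i - t (i - 1)) / r * B)"
        by (rule sum_mono) (rule badi)
      also have "\<dots> = (2 * m + B / r) * (\<Sum>i=1..n. t i - t (i - 1))"
      proof -
        have "(\<Sum>i=1..n. 2 * m * (t i - t (i - 1)) + (t i - t (i - 1)) / r * B)
              = (\<Sum>i=1..n. (2 * m + B / r) * (t i - t (i - 1)))"
          by (rule sum.cong) (simp_all add: algebra_simps add_divide_distrib diff_divide_distrib)
        thus ?thesis by (simp only: sum_distrib_left)
      qed
      also have "\<dots> = (2 * m + B / r) * (b - a)" using quant_len_sum[OF q] by simp
      also have "\<dots> = \<rho>'"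
      proof -
        have gen: "\<And>X C R::real. C > 0 \<Longrightarrow> R > 0 \<Longrightarrow> (2 * (X / (4 * C)) + X * R / (2 * C) / R) * C = X"
          by (simp add: field_simps)
        show ?thesis unfolding B m_def using gen[OF ba r(1)] by simp
      qed
      finally show ?thesis .
    qed
    have jen: "(\<Sum>i=1..n. P i * ln (12 * Dd i / P i)) \<le> ln (12 * distortion f n t c)"
    proof -
      have "(\<Sum>i=1..n. P i * ln (12 * Dd i / P i)) \<le> ln (\<Sum>i=1..n. P i * (12 * Dd i / P i))"
        by (rule jensen_ln) (use Ppos Dpos Psum in auto)
      also have "(\<Sum>i=1..n. P i * (12 * Dd i / P i)) = 12 * distortion f n t c"
      proof -
        have "(\<Sum>i=1..n. P i * (12 * Dd i / P i)) = (\<Sum>i=1..n. 12 * Dd i)"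
        proof (rule sum.cong)
          fix i assume "i \<in> {1..n}"
          thus "P i * (12 * Dd i / P i) = 12 * Dd i" using Ppos[of i] by simp
        qed simp
        thus ?thesis using Dsum by (simp add: sum_distrib_left)
      qed
      finally show ?thesis .
    qed
    have "(\<Sum>i=1..n. E i - P i * ln (P i))
        \<ge> (\<Sum>i=1..n. - (P i / 2) * ln (12 * Dd i / P i) - P i * ln (1 + \<eta>) - K0 / 2 * bad i)"
      by (rule sum_mono) (rule Ti)
    moreover have "(\<Sum>i=1..n. - (P i / 2) * ln (12 * Dd i / P i) - P i * ln (1 + \<eta>) - K0 / 2 * bad i)
        = - (\<Sum>i=1..n. P i * ln (12 * Dd i / P i)) / 2 - ln (1 + \<eta>) * (\<Sum>i=1..n. P i) - K0 / 2 * (\<Sum>i=1..n. bad i)"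
      by (simp add: sum.distrib sum_subtractf sum_distrib_left sum_divide_distrib sum_negf algebra_simps)
    moreover have "(\<Sum>i=1..n. E i - P i * ln (P i)) = integral {a..b} (\<lambda>x. f x * ln (f x)) + (\<Sum>i=1..n. - P i * ln (P i))"
      using Esum by (simp add: sum_subtractf sum_negf)
    moreover have "K0 / 2 * (\<Sum>i=1..n. bad i) \<le> K0 / 2 * \<rho>'" using badsum K0 by (intro mult_left_mono) auto
    ultimately have "integral {a..b} (\<lambda>x. f x * ln (f x)) + (\<Sum>i=1..n. - P i * ln (P i))
       \<ge> - ln (12 * distortion f n t c) / 2 - \<rho> / 2 - \<rho> / 2"
      using jen \<eta>3 \<rho>'2 Psum by (simp only: Psum mult_1_right)
    thus "(\<Sum>i=1..n. - cellprob f t i * ln (cellprob f t i))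
      \<ge> - integral {a..b} (\<lambda>x. f x * ln (f x)) - ln (12 * distortion f n t c) / 2 - \<rho>"
      by (simp add: P_def cellprob_def)
  qed
qed


lemma UB_uni:
  fixes \<delta> \<epsilon> rr M :: real
  assumes d: "0 < \<delta>" and e: "\<epsilon> > 0"
    and uc: "\<forall>x\<in>{a..b}. \<forall>y\<in>{a..b}. \<bar>x - y\<bar> < rr \<longrightarrow> \<bar>f x - f y\<bar> < \<epsilon>"
    and dr: "\<delta> < rr" and M: "\<forall>x. f x \<le> M"
  defines "N \<equiv> uni_n a b \<delta>" and "t \<equiv> uni_t a b \<delta>"
  shows "(\<Sum>i=1..N. - cellprob f t i * ln (cellprob f t i))
           \<le> - integral {a..b} (\<lambda>x. f x * ln (f x)) - ln \<delta> + (b - a + \<delta>) * \<epsilon> + M * \<delta>"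
    "12 * distortion f N t (uni_c a b \<delta>) \<le> \<delta>^2 * (1 + \<epsilon> * (b - a))"
proof -
  have q: "is_quantizer a b N t" using uni_facts[OF ab d] by (simp add: N_def t_def)
  have Nd: "real N * \<delta> < b - a + \<delta>" using uni_facts[OF ab d] by (simp add: N_def t_def)
  have len: "\<And>i. i \<in> {1..N} \<Longrightarrow> t i - t (i - 1) \<le> \<delta>" using uni_facts(3)[OF ab d] by (simp add: N_def t_def)
  define P where "P = (\<lambda>i. integral {t (i - 1)..t i} f)"
  define E where "E = (\<lambda>i. integral {t (i - 1)..t i} (\<lambda>x. f x * ln (f x)))"
  have cell: "\<And>i. i \<in> {1..N} \<Longrightarrow> a \<le> t (i - 1) \<and> t (i - 1) < t i \<and> t i \<le> b"
    using quant_cell[OF q] by blast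
  have Ppos: "\<And>i. i \<in> {1..N} \<Longrightarrow> P i > 0" unfolding P_def using p_pos cell by blast
  have Psum: "(\<Sum>i=1..N. P i) = 1" using quant_prob_sum[OF q] by (simp add: P_def cellprob_def)
  have Esum: "(\<Sum>i=1..N. E i) = integral {a..b} (\<lambda>x. f x * ln (f x))"
    using quant_sum[OF q int_fln_ab] by (simp add: E_def)
  have Lsum: "(\<Sum>i=1..N. t i - t (i - 1)) = b - a" by (rule quant_len_sum[OF q])
  have flat: "\<And>i. i \<in> {1..N} \<Longrightarrow> \<forall>x\<in>{t (i - 1)..t i}. \<forall>y\<in>{t (i - 1)..t i}. f y \<le> f x + \<epsilon>"
  proof (intro ballI)
    fix i x y assume i: "i \<in> {1..N}" and x: "x \<in> {t (i - 1)..t i}" and y: "y \<in> {t (i - 1)..t i}"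
    have "\<bar>y - x\<bar> < rr" using x y len[OF i] dr by auto
    moreover have "x \<in> {a..b}" "y \<in> {a..b}" using x y cell[OF i] by auto
    ultimately have "\<bar>f y - f x\<bar> < \<epsilon>" using uc by blast
    thus "f y \<le> f x + \<epsilon>" by linarith
  qed
  have PM: "\<And>i. i \<in> {1..N} \<Longrightarrow> P i \<le> M * (t i - t (i - 1))"
  proof -
    fix i assume i: "i \<in> {1..N}"
    have "P i \<le> integral {t (i - 1)..t i} (\<lambda>_. M)"
      unfolding P_def by (rule integral_le) (use int_f cell[OF i] M in auto)
    thus "P i \<le> M * (t i - t (i - 1))" using cell[OF i] by (simp add: mult.commute)
  qed
  have termi: "\<And>i. i \<in> {1..N} \<Longrightarrow> E i - P i * ln (P i) + P i * ln \<delta>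
                 \<le> M * (\<delta> - (t i - t (i - 1))) + \<delta> * \<epsilon>"
  proof -
    fix i assume i: "i \<in> {1..N}"
    define \<Delta> where "\<Delta> = t i - t (i - 1)"
    have \<Delta>: "\<Delta> > 0" "\<Delta> \<le> \<delta>" using cell[OF i] len[OF i] by (auto simp: \<Delta>_def)
    have "E i - P i * ln (P i / \<delta>) \<le> \<delta> * (P i / \<Delta> + \<epsilon>) - P i"
      unfolding E_def P_def \<Delta>_def by (rule cell_uni_ent) (use cell[OF i] d flat[OF i] in auto)
    moreover have "ln (P i / \<delta>) = ln (P i) - ln \<delta>" using Ppos[OF i] d by (intro ln_divide_pos) auto
    moreover have "\<delta> * (P i / \<Delta>) - P i \<le> M * (\<delta> - \<Delta>)"
    proof -
      have "\<delta> * (P i / \<Delta>) - P i = P i * (\<delta> - \<Delta>) / \<Delta>" using \<Delta> by (simp add: field_simps)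
      also have "\<dots> \<le> M * \<Delta> * (\<delta> - \<Delta>) / \<Delta>"
        using PM[OF i] \<Delta> by (intro divide_right_mono mult_right_mono) (auto simp: \<Delta>_def)
      also have "\<dots> = M * (\<delta> - \<Delta>)" using \<Delta> by simp
      finally show ?thesis .
    qed
    ultimately show "E i - P i * ln (P i) + P i * ln \<delta> \<le> M * (\<delta> - (t i - t (i - 1))) + \<delta> * \<epsilon>"
      by (simp add: \<Delta>_def algebra_simps)
  qed
  have "(\<Sum>i=1..N. E i - P i * ln (P i) + P i * ln \<delta>) \<le> (\<Sum>i=1..N. M * (\<delta> - (t i - t (i - 1))) + \<delta> * \<epsilon>)"
    by (rule sum_mono) (rule termi)
  also have "\<dots> = M * (real N * \<delta> - (b - a)) + real N * \<delta> * \<epsilon>"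
  proof -
    have "(\<Sum>i=1..N. M * (\<delta> - (t i - t (i - 1))) + \<delta> * \<epsilon>)
        = (\<Sum>i=1..N. (M * \<delta> + \<delta> * \<epsilon>) - M * (t i - t (i - 1)))"
      by (rule sum.cong) (simp_all add: algebra_simps)
    also have "\<dots> = real N * (M * \<delta> + \<delta> * \<epsilon>) - M * (\<Sum>i=1..N. t i - t (i - 1))"
      by (simp only: sum_subtractf sum_distrib_left[symmetric] sum_constant card_atLeastAtMost) simp
    also have "\<dots> = M * (real N * \<delta> - (b - a)) + real N * \<delta> * \<epsilon>"
      unfolding Lsum by (simp add: algebra_simps)
    finally show ?thesis .
  qed
  also have "\<dots> \<le> M * \<delta> + (b - a + \<delta>) * \<epsilon>"
  proof -
    have M0: "M \<ge> 0" using M fge0 order_trans by blast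
    have "M * (real N * \<delta> - (b - a)) \<le> M * \<delta>" using Nd M0 by (intro mult_left_mono) auto
    moreover have "real N * \<delta> * \<epsilon> \<le> (b - a + \<delta>) * \<epsilon>" using Nd e by (intro mult_right_mono) auto
    ultimately show ?thesis by linarith
  qed
  finally have A: "(\<Sum>i=1..N. E i - P i * ln (P i) + P i * ln \<delta>) \<le> M * \<delta> + (b - a + \<delta>) * \<epsilon>" .
  have "(\<Sum>i=1..N. E i - P i * ln (P i) + P i * ln \<delta>)
       = integral {a..b} (\<lambda>x. f x * ln (f x)) + (\<Sum>i=1..N. - P i * ln (P i)) + ln \<delta>"
  proof -
    have "(\<Sum>i=1..N. E i - P i * ln (P i) + P i * ln \<delta>)
        = (\<Sum>i=1..N. E i) + (\<Sum>i=1..N. - P i * ln (P i)) + (\<Sum>i=1..N. P i) * ln \<delta>"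
      by (simp add: sum.distrib sum_subtractf sum_negf sum_distrib_right)
    thus ?thesis using Esum Psum by simp
  qed
  with A show "(\<Sum>i=1..N. - cellprob f t i * ln (cellprob f t i))
           \<le> - integral {a..b} (\<lambda>x. f x * ln (f x)) - ln \<delta> + (b - a + \<delta>) * \<epsilon> + M * \<delta>"
    by (simp add: P_def cellprob_def)
  have Dterm: "\<And>i. i \<in> {1..N} \<Longrightarrow> 12 * integral {t (i - 1)..t i} (\<lambda>x. (x - uni_c a b \<delta> i)^2 * f x)
        \<le> \<delta>^2 * (P i + \<epsilon> * (t i - t (i - 1)))"
  proof -
    fix i assume i: "i \<in> {1..N}"
    define \<Delta> where "\<Delta> = t i - t (i - 1)"
    have \<Delta>: "\<Delta> > 0" "\<Delta> \<le> \<delta>" using cell[OF i] len[OF i] by (auto simp: \<Delta>_def)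
    have c: "uni_c a b \<delta> i = (t (i - 1) + t i) / 2" by (simp add: uni_c_def t_def)
    have "integral {t (i - 1)..t i} (\<lambda>x. (x - uni_c a b \<delta> i)^2 * f x) \<le> (P i / \<Delta> + \<epsilon>) * (\<Delta>^3 / 12)"
      unfolding c P_def \<Delta>_def by (rule cell_uni_dist) (use cell[OF i] flat[OF i] in auto)
    also have "(P i / \<Delta> + \<epsilon>) * (\<Delta>^3 / 12) = (P i + \<epsilon> * \<Delta>) * \<Delta>^2 / 12"
      using \<Delta> by (simp add: field_simps power2_eq_square power3_eq_cube)
    also have "\<dots> \<le> (P i + \<epsilon> * \<Delta>) * \<delta>^2 / 12"
      using \<Delta> Ppos[OF i] e by (intro divide_right_mono mult_left_mono power_mono) auto
    finally show "12 * integral {t (i - 1)..t i} (\<lambda>x. (x - uni_c a b \<delta> i)^2 * f x)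
        \<le> \<delta>^2 * (P i + \<epsilon> * (t i - t (i - 1)))" by (simp add: \<Delta>_def algebra_simps)
  qed
  have "12 * distortion f N t (uni_c a b \<delta>) = (\<Sum>i=1..N. 12 * integral {t (i - 1)..t i} (\<lambda>x. (x - uni_c a b \<delta> i)^2 * f x))"
    by (simp add: distortion_def sum_distrib_left)
  also have "\<dots> \<le> (\<Sum>i=1..N. \<delta>^2 * (P i + \<epsilon> * (t i - t (i - 1))))"
    by (rule sum_mono) (rule Dterm)
  also have "\<dots> = \<delta>^2 * (1 + \<epsilon> * (b - a))"
    using Psum Lsum by (simp add: sum_distrib_left[symmetric] sum.distrib)
  finally show "12 * distortion f N t (uni_c a b \<delta>) \<le> \<delta>^2 * (1 + \<epsilon> * (b - a))" .
qed


lemma quant_P: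
  assumes q: "is_quantizer a b n t"
  shows "\<forall>i\<in>{1..n}. cellprob f t i > 0" "(\<Sum>i=1..n. cellprob f t i) = 1"
    "\<forall>i\<in>{1..n}. cellprob f t i \<le> 1" "n \<ge> 1"
proof -
  show P0: "\<forall>i\<in>{1..n}. cellprob f t i > 0"
    using quant_cell[OF q] p_pos by (auto simp: cellprob_def)
  show P1: "(\<Sum>i=1..n. cellprob f t i) = 1" by (rule quant_prob_sum[OF q])
  show "\<forall>i\<in>{1..n}. cellprob f t i \<le> 1"
  proof
    fix i assume i: "i \<in> {1..n}"
    have "cellprob f t i \<le> (\<Sum>j=1..n. cellprob f t j)"
      by (rule member_le_sum) (use i P0 in \<open>auto simp: less_imp_le\<close>)
    thus "cellprob f t i \<le> 1" using P1 by simp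
  qed
  show "n \<ge> 1" using q by (simp add: is_quantizer_def)
qed

lemma Hn_nonneg:
  assumes q: "is_quantizer a b n t"
  shows "(\<Sum>i=1..n. - cellprob f t i * ln (cellprob f t i)) \<ge> 0"
proof (rule sum_nonneg)
  fix i assume i: "i \<in> {1..n}"
  have "0 < cellprob f t i" "cellprob f t i \<le> 1" using quant_P[OF q] i by auto
  hence "ln (cellprob f t i) \<le> 0" by simp
  thus "0 \<le> - cellprob f t i * ln (cellprob f t i)"
    using \<open>0 < cellprob f t i\<close> by (simp add: mult_nonneg_nonpos)
qed

lemma aoi_opt_lb:
  assumes q: "is_quantizer a b n t" and z: "\<forall>x\<ge>0. z x \<ge> 0"
  shows "aoi_opt f n t z \<ge> 3/2 * ((\<Sum>i=1..n. - cellprob f t i * ln (cellprob f t i)) / ln 2)"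
proof -
  note PP = quant_P[OF q]
  have ne: "{aoi f n t z l | l. is_code n l} \<noteq> {}" using code_exists[OF PP(4)] by blast
  show ?thesis unfolding aoi_opt_def
  proof (rule cInf_greatest[OF ne])
    fix y assume "y \<in> {aoi f n t z l | l. is_code n l}"
    then obtain l where l: "is_code n l" "y = aoi f n t z l" by blast
    have lpos: "\<forall>i\<in>{1..n}. l i > 0" using l(1) by (simp add: is_code_def)
    have "y \<ge> 3/2 * (\<Sum>i=1..n. cellprob f t i * l i)"
      unfolding l(2) by (rule aoi_lb) (use PP lpos z in \<open>auto simp: less_imp_le\<close>)
    moreover have "(\<Sum>i=1..n. cellprob f t i * l i) * ln 2 \<ge> (\<Sum>i=1..n. - cellprob f t i * ln (cellprob f t i))"
      by (rule kraft_lb) (use PP l(1) in \<open>auto simp: less_imp_le\<close>)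
    hence "(\<Sum>i=1..n. cellprob f t i * l i) \<ge> (\<Sum>i=1..n. - cellprob f t i * ln (cellprob f t i)) / ln 2"
      by (simp add: divide_le_eq)
    ultimately show "3/2 * ((\<Sum>i=1..n. - cellprob f t i * ln (cellprob f t i)) / ln 2) \<le> y" by linarith
  qed
qed

lemma aoi_opt_ub:
  fixes \<delta> M :: real
  assumes d: "0 < \<delta>" "\<delta> < b - a" and M: "M \<ge> 1" "\<forall>x. f x \<le> M"
  defines "N \<equiv> uni_n a b \<delta>" and "t \<equiv> uni_t a b \<delta>"
  defines "H \<equiv> (\<Sum>i=1..N. - cellprob f t i * ln (cellprob f t i)) / ln 2"
  shows "aoi_opt f N t (\<lambda>_. 0) \<le> 3/2 * H + ((b - a + \<delta>) * (4 + M * (ln M)^2) / (ln 2)^2) / (2 * H)"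
    "H \<ge> - log 2 (M * \<delta>)" "H > 0"
proof -
  have q: "is_quantizer a b N t" using uni_facts[OF ab d(1)] by (simp add: N_def t_def)
  have N2: "N \<ge> 2" using uni_facts(4)[OF ab d(1) d(2)] by (simp add: N_def)
  have Nd: "real N * \<delta> < b - a + \<delta>" using uni_facts[OF ab d(1)] by (simp add: N_def t_def)
  have len: "\<And>i. i \<in> {1..N} \<Longrightarrow> t i - t (i - 1) \<le> \<delta>" using uni_facts(3)[OF ab d(1)] by (simp add: N_def t_def)
  have cell: "\<And>i. i \<in> {1..N} \<Longrightarrow> a \<le> t (i - 1) \<and> t (i - 1) < t i \<and> t i \<le> b"
    using quant_cell[OF q] by blast
  define P where "P = cellprob f t"
  note PP = quant_P[OF q, folded P_def]
  have Plt: "\<And>i. i \<in> {1..N} \<Longrightarrow> P i < 1"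
  proof -
    fix i assume i: "i \<in> {1..N}"
    define j :: nat where "j = (if i = 1 then 2 else 1)"
    have j: "j \<in> {1..N} - {i}" using N2 i by (auto simp: j_def)
    have "(\<Sum>k=1..N. P k) = P i + (\<Sum>k\<in>{1..N} - {i}. P k)"
      using i by (simp add: sum.remove)
    moreover have "(\<Sum>k\<in>{1..N} - {i}. P k) > 0"
      by (rule sum_pos2[OF _ j]) (use PP j in \<open>auto simp: less_imp_le\<close>)
    ultimately show "P i < 1" using PP by simp
  qed
  have PM: "\<And>i. i \<in> {1..N} \<Longrightarrow> P i \<le> M * \<delta>"
  proof -
    fix i assume i: "i \<in> {1..N}"
    have "P i \<le> integral {t (i - 1)..t i} (\<lambda>_. M)"
      unfolding P_def cellprob_def by (rule integral_le) (use int_f cell[OF i] M in auto)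
    also have "\<dots> = M * (t i - t (i - 1))" using cell[OF i] by (simp add: mult.commute)
    also have "\<dots> \<le> M * \<delta>" using len[OF i] M by (intro mult_left_mono) auto
    finally show "P i \<le> M * \<delta>" .
  qed
  define l where "l = (\<lambda>i. - log 2 (P i))"
  have lpos: "\<forall>i\<in>{1..N}. l i > 0" using PP Plt by (auto simp: l_def)
  have Hl: "H = (\<Sum>i=1..N. P i * l i)"
    by (simp add: H_def l_def P_def log_def sum_divide_distrib)
  show Hpos: "H > 0" unfolding Hl
    by (rule sum_pos2[of _ 1]) (use PP lpos N2 in \<open>auto simp: less_imp_le\<close>)
  have code: "is_code N l"
  proof -
    have "(\<Sum>i=1..N. 2 powr (- l i)) = (\<Sum>i=1..N. P i)"
      by (rule sum.cong) (use PP in \<open>auto simp: l_def\<close>)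
    thus ?thesis unfolding is_code_def using lpos PP by simp
  qed
  have bdd: "bdd_below {aoi f N t (\<lambda>_. 0) l | l. is_code N l}"
  proof (rule bdd_belowI)
    fix y assume "y \<in> {aoi f N t (\<lambda>_. 0) l | l. is_code N l}"
    then obtain l' where l': "is_code N l'" "y = aoi f N t (\<lambda>_. 0) l'" by blast
    have "y \<ge> 3/2 * (\<Sum>i=1..N. cellprob f t i * l' i)"
      unfolding l'(2) by (rule aoi_lb) (use PP l'(1) in \<open>auto simp: less_imp_le is_code_def P_def\<close>)
    moreover have "(\<Sum>i=1..N. cellprob f t i * l' i) \<ge> 0"
      by (rule sum_nonneg) (use PP l'(1) in \<open>auto simp: is_code_def P_def less_imp_le\<close>)
    ultimately show "0 \<le> y" by linarith
  qed
  have "aoi_opt f N t (\<lambda>_. 0) \<le> aoi f N t (\<lambda>_. 0) l"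
    unfolding aoi_opt_def by (rule cInf_lower[OF _ bdd]) (use code in blast)
  also have "aoi f N t (\<lambda>_. 0) l = (\<Sum>i=1..N. P i * (l i)^2) / (2 * H) + H"
    by (simp add: aoi_def Hl P_def)
  also have "\<dots> \<le> 3/2 * H + (\<Sum>i=1..N. P i * (l i - (- log 2 \<delta>))^2) / (2 * H)"
    by (rule aoi_z0_bound) (use PP Hl Hpos in \<open>auto simp: less_imp_le\<close>)
  also have "(\<Sum>i=1..N. P i * (l i - (- log 2 \<delta>))^2) \<le> (b - a + \<delta>) * (4 + M * (ln M)^2) / (ln 2)^2"
  proof -
    define K where "K = 4 + M * (ln M)^2"
    have tm: "\<And>i. i \<in> {1..N} \<Longrightarrow> P i * (l i - (- log 2 \<delta>))^2 \<le> \<delta> * K / (ln 2)^2"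
    proof -
      fix i assume i: "i \<in> {1..N}"
      define x where "x = P i / \<delta>"
      have x: "0 < x" "x \<le> M" using PP i PM[OF i] d by (auto simp: x_def divide_simps mult.commute)
      have "log 2 x = log 2 (P i) - log 2 \<delta>"
        unfolding x_def using PP i d by (intro log_divide_pos) auto
      hence "l i - (- log 2 \<delta>) = - log 2 x" by (simp add: l_def)
      hence "P i * (l i - (- log 2 \<delta>))^2 = \<delta> * (x * (ln x)^2) / (ln 2)^2"
        using d by (simp add: x_def log_def power_divide)
      also have "\<dots> \<le> \<delta> * K / (ln 2)^2"
        using xln2_bound[OF x M(1)] d by (intro divide_right_mono mult_left_mono) (auto simp: K_def)
      finally show "P i * (l i - (- log 2 \<delta>))^2 \<le> \<delta> * K / (ln 2)^2" .
    qed
    have "(\<Sum>i=1..N. P i * (l i - (- log 2 \<delta>))^2) \<le> (\<Sum>i=1..N. \<delta> * K / (ln 2)^2)"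
      by (rule sum_mono) (rule tm)
    also have "\<dots> = real N * \<delta> * K / (ln 2)^2" by simp
    also have "\<dots> \<le> (b - a + \<delta>) * K / (ln 2)^2"
    proof -
      have "K \<ge> 0" using M by (simp add: K_def)
      thus ?thesis using Nd by (intro divide_right_mono mult_right_mono) auto
    qed
    finally show ?thesis by (simp add: K_def)
  qed
  hence "(\<Sum>i=1..N. P i * (l i - (- log 2 \<delta>))^2) / (2 * H) \<le> (b - a + \<delta>) * (4 + M * (ln M)^2) / (ln 2)^2 / (2 * H)"
    using Hpos by (intro divide_right_mono) auto
  finally show "aoi_opt f N t (\<lambda>_. 0) \<le> 3/2 * H + ((b - a + \<delta>) * (4 + M * (ln M)^2) / (ln 2)^2) / (2 * H)"
    by simp
  have "(\<Sum>i=1..N. P i * l i) \<ge> (\<Sum>i=1..N. P i * (- log 2 (M * \<delta>)))"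
  proof (rule sum_mono)
    fix i assume i: "i \<in> {1..N}"
    have "M * \<delta> > 0" using M d by simp
    hence "log 2 (P i) \<le> log 2 (M * \<delta>)" using PP i PM[OF i] by (subst log_le_cancel_iff) auto
    thus "P i * (- log 2 (M * \<delta>)) \<le> P i * l i" using PP i by (intro mult_left_mono) (auto simp: l_def less_imp_le)
  qed
  also have "(\<Sum>i=1..N. P i * (- log 2 (M * \<delta>))) = - log 2 (M * \<delta>)"
    using PP by (simp only: sum_distrib_right[symmetric])
  finally show "H \<ge> - log 2 (M * \<delta>)" using Hl by simp
qed


lemma dist_pos:
  assumes q: "is_quantizer a b n t"
  shows "distortion f n t c > 0"
proof -
  have n: "n \<ge> 1" using q by (simp add: is_quantizer_def)
  show ?thesis unfolding distortion_def
    by (rule sum_pos) (use n d_pos quant_cell[OF q] in auto)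
qed

lemma gap:
  fixes W e :: real
  assumes W: "W \<ge> 0" and e: "e > 0"
  shows "\<exists>\<delta>1>0. \<forall>\<delta>. 0 < \<delta> \<and> \<delta> < \<delta>1 \<longrightarrow>
    \<bar>aoi_opt f (uni_n a b \<delta>) (uni_t a b \<delta>) (\<lambda>_. 0)
            - Inf {aoi_opt f n t z | n t c z.
                     is_policy W z \<and> is_quantizer a b n t \<and>
                     distortion f n t c \<le> distortion f (uni_n a b \<delta>) (uni_t a b \<delta>) (uni_c a b \<delta>)}\<bar> < e"
proof -
  define hI where "hI = integral {a..b} (\<lambda>x. f x * ln (f x))"
  obtain M where M: "M \<ge> 1" "\<forall>x. f x \<le> M" using bounded_f by auto
  define Vmax where "Vmax = (b - a + 1) * (4 + M * (ln M)^2) / (ln 2)^2"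
  have Vmax: "Vmax \<ge> 0" using ab M by (simp add: Vmax_def)
  define \<tau> where "\<tau> = e * ln 2 / 12"
  have \<tau>: "\<tau> > 0" using e by (simp add: \<tau>_def)
  obtain D0 where D0: "D0 > 0" and LBq: "\<forall>n t c. is_quantizer a b n t \<longrightarrow> distortion f n t c \<le> D0 \<longrightarrow>
    (\<Sum>i=1..n. - cellprob f t i * ln (cellprob f t i))
      \<ge> - hI - ln (12 * distortion f n t c) / 2 - \<tau>"
    using LB[OF \<tau>] unfolding hI_def by blast
  define \<epsilon> where "\<epsilon> = \<tau> / (2 * (b - a) + 1)"
  have \<epsilon>: "\<epsilon> > 0" using \<tau> ab by (simp add: \<epsilon>_def)
  have \<epsilon>2: "(2 * (b - a) + 1) * \<epsilon> = \<tau>" using ab by (simp add: \<epsilon>_def)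
  obtain r0 where r0: "r0 > 0" "\<forall>x\<in>{a..b}. \<forall>y\<in>{a..b}. \<bar>x - y\<bar> < r0 \<longrightarrow> \<bar>f x - f y\<bar> < \<epsilon>"
    using unif_cont[OF \<epsilon>] by auto
  define Q where "Q = Vmax / e + 1"
  have Q: "Q > 0" "Vmax / Q < e"
  proof -
    show "Q > 0" using Vmax e by (simp add: Q_def add_nonneg_pos)
    have "Vmax < e * Q" using e by (simp add: Q_def field_simps)
    thus "Vmax / Q < e" using \<open>Q > 0\<close> by (simp add: divide_less_eq mult.commute)
  qed
  define \<delta>1 where "\<delta>1 = Min {1, b - a, r0, \<tau> / M, 12 * D0 / (1 + \<epsilon> * (b - a)), 1 / (M * 2 powr Q)}"
  have \<delta>1: "\<delta>1 > 0" using ab r0 \<tau> M D0 \<epsilon> by (simp add: \<delta>1_def add_pos_pos)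
  have \<delta>1le: "\<delta>1 \<le> 1" "\<delta>1 \<le> b - a" "\<delta>1 \<le> r0" "\<delta>1 \<le> \<tau> / M" "\<delta>1 \<le> 12 * D0 / (1 + \<epsilon> * (b - a))"
    "\<delta>1 \<le> 1 / (M * 2 powr Q)"
    by (simp_all add: \<delta>1_def)
  show ?thesis
  proof (intro exI[of _ \<delta>1] conjI allI impI)
    show "\<delta>1 > 0" by (rule \<delta>1)
    fix \<delta> assume "0 < \<delta> \<and> \<delta> < \<delta>1"
    hence d: "0 < \<delta>" "\<delta> < \<delta>1" by auto
    define N where "N = uni_n a b \<delta>"
    define t where "t = uni_t a b \<delta>"
    define Du where "Du = distortion f N t (uni_c a b \<delta>)"
    define S where "S = {aoi_opt f n t z | n t c z. is_policy W z \<and> is_quantizer a b n t \<and> distortion f n t c \<le> Du}"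
    define Hu where "Hu = (\<Sum>i=1..N. - cellprob f t i * ln (cellprob f t i))"
    define U where "U = aoi_opt f N t (\<lambda>_. 0)"
    have dba: "\<delta> < b - a" "\<delta> < 1" "\<delta> < r0" "\<delta> < \<tau> / M" "\<delta> < 12 * D0 / (1 + \<epsilon> * (b - a))"
      "\<delta> < 1 / (M * 2 powr Q)" using d \<delta>1le by linarith+
    have q: "is_quantizer a b N t" using uni_facts[OF ab d(1)] by (simp add: N_def t_def)
    note ub = UB_uni[OF d(1) \<epsilon> r0(2) dba(3) M(2), folded N_def t_def Du_def hI_def Hu_def]
    have ub1': "Hu \<le> - hI - ln \<delta> + (b - a + \<delta>) * \<epsilon> + M * \<delta>" using ub(1) by (simp add: Hu_def)
    have Dpos: "Du > 0" unfolding Du_def by (rule dist_pos[OF q])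
    have Du_le: "12 * Du \<le> \<delta>^2 * (1 + \<epsilon> * (b - a))" using ub(2) by (simp add: Du_def)
    have Du0: "Du \<le> D0"
    proof -
      have "\<delta>^2 * (1 + \<epsilon> * (b - a)) \<le> \<delta> * (1 + \<epsilon> * (b - a))"
        using d dba(2) \<epsilon> ab by (intro mult_right_mono) (auto simp: power2_eq_square)
      also have "\<dots> \<le> 12 * D0"
      proof -
        have pd: "1 + \<epsilon> * (b - a) > 0" using \<epsilon> ab by (simp add: add_pos_nonneg)
        show ?thesis using dba(5) pos_less_divide_eq[OF pd] by simp
      qed
      finally show ?thesis using Du_le by simp
    qed
    have lnDu: "ln (12 * Du) / 2 \<le> ln \<delta> + \<epsilon> * (b - a) / 2"
    proof -
      have "ln (12 * Du) \<le> ln (\<delta>^2 * (1 + \<epsilon> * (b - a)))" using Du_le Dpos by (intro ln_mono) auto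
      also have "\<dots> = 2 * ln \<delta> + ln (1 + \<epsilon> * (b - a))"
        using d \<epsilon> ab by (simp add: ln_mult_pos ln_realpow add_pos_nonneg)
      also have "ln (1 + \<epsilon> * (b - a)) \<le> \<epsilon> * (b - a)" using \<epsilon> ab by (intro ln_add_one_self_le_self) simp
      finally show ?thesis by simp
    qed
    have elem_lb: "\<And>y. y \<in> S \<Longrightarrow> y \<ge> 3/2 * ((Hu - 3 * \<tau>) / ln 2)"
    proof -
      fix y assume "y \<in> S"
      then obtain n t' c z where y: "y = aoi_opt f n t' z" "is_policy W z" "is_quantizer a b n t'"
        "distortion f n t' c \<le> Du" unfolding S_def by blast
      have z: "\<forall>x\<ge>0. z x \<ge> 0" using y(2) by (simp add: is_policy_def)
      have Dq: "distortion f n t' c > 0" by (rule dist_pos[OF y(3)])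
      have "(\<Sum>i=1..n. - cellprob f t' i * ln (cellprob f t' i)) \<ge> - hI - ln (12 * distortion f n t' c) / 2 - \<tau>"
        using LBq y(3,4) Du0 by auto
      moreover have "ln (12 * distortion f n t' c) \<le> ln (12 * Du)" using y(4) Dq by (intro ln_mono) auto
      ultimately have "(\<Sum>i=1..n. - cellprob f t' i * ln (cellprob f t' i)) \<ge> Hu - 3 * \<tau>"
      proof -
        assume h1: "(\<Sum>i=1..n. - cellprob f t' i * ln (cellprob f t' i)) \<ge> - hI - ln (12 * distortion f n t' c) / 2 - \<tau>"
          and h2: "ln (12 * distortion f n t' c) \<le> ln (12 * Du)"
        have "(b - a + \<delta>) * \<epsilon> + M * \<delta> + \<epsilon> * (b - a) / 2 \<le> 2 * \<tau>"
        proof -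
          have de: "\<delta> * \<epsilon> \<le> 1 * \<epsilon>" using dba(2) \<epsilon> by (intro mult_right_mono) auto
          have e1: "(b - a + \<delta>) * \<epsilon> + \<epsilon> * (b - a) / 2 = 3/2 * ((b - a) * \<epsilon>) + \<delta> * \<epsilon>"
            by (simp add: field_simps)
          have e2: "(2 * (b - a) + 1) * \<epsilon> = 2 * ((b - a) * \<epsilon>) + \<epsilon>" by (simp add: algebra_simps)
          have e3: "(b - a) * \<epsilon> \<ge> 0" using ab \<epsilon> by simp
          have "(b - a + \<delta>) * \<epsilon> + \<epsilon> * (b - a) / 2 \<le> (2 * (b - a) + 1) * \<epsilon>"
            unfolding e1 e2 using de e3 by linarith
          moreover have "M * \<delta> \<le> \<tau>" using dba(4) M by (simp add: field_simps)
          ultimately show ?thesis using \<epsilon>2 by linarith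
        qed
        thus ?thesis using h1 h2 lnDu ub1' by linarith
      qed
      hence "3/2 * ((Hu - 3 * \<tau>) / ln 2) \<le> 3/2 * ((\<Sum>i=1..n. - cellprob f t' i * ln (cellprob f t' i)) / ln 2)"
        by (simp add: divide_right_mono)
      also have "\<dots> \<le> y" unfolding y(1) by (rule aoi_opt_lb[OF y(3) z])
      finally show "y \<ge> 3/2 * ((Hu - 3 * \<tau>) / ln 2)" .
    qed
    have US: "U \<in> S"
    proof -
      have "is_policy W (\<lambda>_. 0)" using W by (simp add: is_policy_def)
      hence "U = aoi_opt f N t (\<lambda>_. 0) \<and> is_policy W (\<lambda>_. 0) \<and> is_quantizer a b N t
             \<and> distortion f N t (uni_c a b \<delta>) \<le> Du" using q by (simp add: U_def Du_def)
      thus ?thesis unfolding S_def by blast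
    qed
    have bddS: "bdd_below S"
    proof (rule bdd_belowI)
      fix y assume "y \<in> S"
      then obtain n t' c z where y: "y = aoi_opt f n t' z" "is_policy W z" "is_quantizer a b n t'"
        unfolding S_def by blast
      have z: "\<forall>x\<ge>0. z x \<ge> 0" using y(2) by (simp add: is_policy_def)
      have "0 \<le> 3/2 * ((\<Sum>i=1..n. - cellprob f t' i * ln (cellprob f t' i)) / ln 2)"
        using Hn_nonneg[OF y(3)] by simp
      also have "\<dots> \<le> y" unfolding y(1) by (rule aoi_opt_lb[OF y(3) z])
      finally show "0 \<le> y" .
    qed
    have LU: "Inf S \<le> U" by (rule cInf_lower[OF US bddS])
    have Llb: "Inf S \<ge> 3/2 * ((Hu - 3 * \<tau>) / ln 2)"
      by (rule cInf_greatest) (use US elem_lb in auto)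
    define H where "H = Hu / ln 2"
    have uo1: "U \<le> 3/2 * H + ((b - a + \<delta>) * (4 + M * (ln M)^2) / (ln 2)^2) / (2 * H)"
      using aoi_opt_ub(1)[OF d(1) dba(1) M] unfolding U_def H_def Hu_def N_def t_def .
    have H: "H > 0" "H \<ge> - log 2 (M * \<delta>)"
      using aoi_opt_ub(2,3)[OF d(1) dba(1) M] unfolding H_def Hu_def N_def t_def by auto
    have HQ: "H \<ge> Q"
    proof -
      have "M * \<delta> < M * (1 / (M * 2 powr Q))" using dba(6) M by (intro mult_strict_left_mono) auto
      also have "\<dots> = 2 powr (- Q)" using M by (simp add: powr_minus_divide)
      finally have "log 2 (M * \<delta>) < log 2 (2 powr (- Q))" using M d by (subst log_less_cancel_iff) auto
      hence "log 2 (M * \<delta>) < - Q" by simp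
      thus ?thesis using H by linarith
    qed
    have "U \<le> 3/2 * H + ((b - a + \<delta>) * (4 + M * (ln M)^2) / (ln 2)^2) / (2 * H)"
      by (rule uo1)
    also have "((b - a + \<delta>) * (4 + M * (ln M)^2) / (ln 2)^2) / (2 * H) \<le> Vmax / (2 * H)"
    proof -
      have "4 + M * (ln M)^2 \<ge> 0" using M by simp
      hence "(b - a + \<delta>) * (4 + M * (ln M)^2) / (ln 2)^2 \<le> Vmax"
        unfolding Vmax_def using dba(2) by (intro divide_right_mono mult_right_mono) auto
      thus ?thesis using H by (intro divide_right_mono) auto
    qed
    also have "Vmax / (2 * H) \<le> Vmax / (2 * Q)"
      using HQ Q Vmax by (intro divide_left_mono mult_left_mono) auto
    finally have Uub: "U \<le> 3/2 * H + Vmax / (2 * Q)" by simp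
    have "U - Inf S \<le> Vmax / (2 * Q) + 3/2 * (3 * \<tau> / ln 2)"
      using Uub Llb by (simp add: H_def diff_divide_distrib algebra_simps)
    also have "3/2 * (3 * \<tau> / ln 2) = 3/8 * e" by (simp add: \<tau>_def)
    finally have "U - Inf S \<le> Vmax / (2 * Q) + 3/8 * e" .
    moreover have "Vmax / (2 * Q) < e / 2" using Q by simp
    ultimately have "U - Inf S < e" using e by linarith
    moreover have "U - Inf S \<ge> 0" using LU by simp
    ultimately show "\<bar>aoi_opt f (uni_n a b \<delta>) (uni_t a b \<delta>) (\<lambda>_. 0)
            - Inf {aoi_opt f n t z | n t c z.
                     is_policy W z \<and> is_quantizer a b n t \<and>
                     distortion f n t c \<le> distortion f (uni_n a b \<delta>) (uni_t a b \<delta>) (uni_c a b \<delta>)}\<bar> < e"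
      by (simp add: U_def S_def Du_def N_def t_def)
  qed
qed

end


theorem theorem1:
  fixes f :: "real \<Rightarrow> real" and a b W :: real
  assumes ab: "a < b"
    and nonneg: "\<forall>x. f x \<ge> 0"
    and support: "closure {x. f x > 0} = {a..b}"
    and pdf: "(f has_integral 1) {a..b}"
    and cont: "continuous_on {a..b} f"
    and diff: "\<forall>x\<in>{a<..<b}. f differentiable (at x)"
    and B1: "(\<lambda>x. f x * (log 2 (f x))^2) absolutely_integrable_on {a..b}"
    and B2: "(\<lambda>x. f x * log 2 (f x)) absolutely_integrable_on {a..b}"
    and W: "W \<ge> 0"
  shows "((\<lambda>\<delta>. aoi_opt f (uni_n a b \<delta>) (uni_t a b \<delta>) (\<lambda>_. 0)
            - Inf {aoi_opt f n t z | n t c z.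
                     is_policy W z \<and> is_quantizer a b n t \<and>
                     distortion f n t c \<le> distortion f (uni_n a b \<delta>) (uni_t a b \<delta>) (uni_c a b \<delta>)})
          \<longlongrightarrow> 0) (at_right 0)"
proof -
  interpret qsetup f a b
    by unfold_locales (use ab nonneg support pdf cont B2 in auto)
  show ?thesis
  proof (rule tendstoI)
    fix e :: real assume e: "e > 0"
    obtain \<delta>1 where d1: "\<delta>1 > 0" and G: "\<forall>\<delta>. 0 < \<delta> \<and> \<delta> < \<delta>1 \<longrightarrow>
      \<bar>aoi_opt f (uni_n a b \<delta>) (uni_t a b \<delta>) (\<lambda>_. 0)
            - Inf {aoi_opt f n t z | n t c z.
                     is_policy W z \<and> is_quantizer a b n t \<and>
                     distortion f n t c \<le> distortion f (uni_n a b \<delta>) (uni_t a b \<delta>) (uni_c a b \<delta>)}\<bar> < e"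
      using gap[OF W e] by blast
    show "\<forall>\<^sub>F \<delta> in at_right 0. dist (aoi_opt f (uni_n a b \<delta>) (uni_t a b \<delta>) (\<lambda>_. 0)
            - Inf {aoi_opt f n t z | n t c z.
                     is_policy W z \<and> is_quantizer a b n t \<and>
                     distortion f n t c \<le> distortion f (uni_n a b \<delta>) (uni_t a b \<delta>) (uni_c a b \<delta>)}) 0 < e"
      unfolding eventually_at_right_field
      by (rule exI[of _ \<delta>1]) (use d1 G in \<open>auto simp: dist_real_def\<close>)
  qed
qed

end
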